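(* (i) For every $\varepsilon>0$ there is a sequence of instances $(\mathcal{T}_n,w_n)$ (finite trees with weight functions $w_n:V(\mathcal{T}_n)\to\mathbb{R}_{\ge0}$) with $w_n(\mathcal{T}_n)=1$ and $\lim_{n\to\infty}\mathtt{OPT}(\mathcal{T}_n,w_n)=\infty$, such that every centroid tree $C_n$ of $(\mathcal{T}_n,w_n)$ satisfies $$\mathtt{cost}_{w_n}(C_n)\ge 2\cdot\mathtt{OPT}(\mathcal{T}_n,w_n)-1-\varepsilon.$$ (ii) There is a sequence of instances $(\mathcal{T}_n,w_n)$, where $w_n$ is the uniform probability distribution on $V(\mathcal{T}_n)$, with $\lim_{n\to\infty}\mathtt{OPT}(\mathcal{T}_n,w_n)=\infty$, such that for every choice of centroid trees $C_n$ of $(\mathcal{T}_n,w_n)$, $$\lim_{n\to\infty}\frac{\mathtt{cost}_{w_n}(C_n)}{\mathtt{OPT}(\mathcal{T}_n,w_n)}=2.$$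
   Context: For a subgraph $\mathcal{H}$ of $\mathcal{T}$, $w(\mathcal{H})=\sum_{x\in V(\mathcal{H})}w(x)$. A search tree on a tree $\mathcal{T}$ is a rooted tree $T$ with vertex set $V(\mathcal{T})$ defined recursively: its root is an arbitrary vertex $r$, and the children of $r$ are the roots of search trees built on the connected components of $\mathcal{T}-r$; a single-vertex tree has only itself as search tree. $\mathtt{cost}_w(T)=\sum_x w(x)\,\mathtt{depth}_T(x)$ with root depth $1$; $\mathtt{OPT}(\mathcal{T},w)$ is the minimum cost over all search trees on $\mathcal{T}$. A vertex $v$ is a centroid of $(\mathcal{T},w)$ if each component $\mathcal{H}$ of $\mathcal{T}-v$ has $w(\mathcal{H})\le w(\mathcal{T})/2$. A search tree $T$ is a centroid tree if each vertex $x$ is a centroid of $(\mathcal{T}[V(T_x)],w)$, $T_x$ being the subtree of $T$ rooted at $x$. *)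

theory Defs
  imports Complex_Main
begin

text \<open>Undirected graphs: vertex set V and a symmetric, irreflexive edge relation E
  (each undirected edge is stored as both ordered pairs).\<close>

definition is_tree :: "'a set \<Rightarrow> ('a \<times> 'a) set \<Rightarrow> bool" where
  "is_tree V E \<longleftrightarrow> finite V \<and> V \<noteq> {} \<and> E \<subseteq> V \<times> V \<and> sym E \<and> irrefl E
     \<and> (\<forall>x\<in>V. \<forall>y\<in>V. (x, y) \<in> E\<^sup>*)
     \<and> card E = 2 * (card V - 1)"

definition components :: "('a \<times> 'a) set \<Rightarrow> 'a set \<Rightarrow> 'a set set" where
  "components E X = {{y \<in> X. (x, y) \<in> (E \<inter> (X \<times> X))\<^sup>*} | x. x \<in> X}"

datatype 'a rtree = Node 'a "'a rtree list"

fun root :: "'a rtree \<Rightarrow> 'a" where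
  "root (Node r ts) = r"

fun vset :: "'a rtree \<Rightarrow> 'a set" where
  "vset (Node r ts) = insert r (\<Union>t\<in>set ts. vset t)"

fun subtrees :: "'a rtree \<Rightarrow> 'a rtree set" where
  "subtrees (Node r ts) = insert (Node r ts) (\<Union>t\<in>set ts. subtrees t)"

inductive search_tree :: "('a \<times> 'a) set \<Rightarrow> 'a set \<Rightarrow> 'a rtree \<Rightarrow> bool" where
  "r \<in> S \<Longrightarrow> distinct (map vset ts) \<Longrightarrow> set (map vset ts) = components E (S - {r})
   \<Longrightarrow> (\<forall>t\<in>set ts. search_tree E (vset t) t) \<Longrightarrow> search_tree E S (Node r ts)"

fun cost_at :: "('a \<Rightarrow> real) \<Rightarrow> nat \<Rightarrow> 'a rtree \<Rightarrow> real" where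
  "cost_at w d (Node r ts) = real d * w r + sum_list (map (cost_at w (Suc d)) ts)"

definition cost :: "('a \<Rightarrow> real) \<Rightarrow> 'a rtree \<Rightarrow> real" where
  "cost w T = cost_at w 1 T"

definition OPT :: "'a set \<Rightarrow> ('a \<times> 'a) set \<Rightarrow> ('a \<Rightarrow> real) \<Rightarrow> real" where
  "OPT V E w = Inf {cost w T | T. search_tree E V T}"

definition is_centroid :: "('a \<times> 'a) set \<Rightarrow> 'a set \<Rightarrow> ('a \<Rightarrow> real) \<Rightarrow> 'a \<Rightarrow> bool" where
  "is_centroid E S w v \<longleftrightarrow> v \<in> S \<and> (\<forall>H \<in> components E (S - {v}). sum w H \<le> sum w S / 2)"

definition centroid_tree :: "'a set \<Rightarrow> ('a \<times> 'a) set \<Rightarrow> ('a \<Rightarrow> real) \<Rightarrow> 'a rtree \<Rightarrow> bool" where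
  "centroid_tree V E w T \<longleftrightarrow> search_tree E V T
     \<and> (\<forall>s\<in>subtrees T. is_centroid E (vset s) w (root s))"

end

theory Submission
  imports Defs
begin

definition conn :: "('a \<times> 'a) set \<Rightarrow> 'a set \<Rightarrow> bool" where
  "conn E H \<longleftrightarrow> (\<forall>a\<in>H. \<forall>b\<in>H. (a, b) \<in> (E \<inter> H \<times> H)\<^sup>*)"

lemma comp_mem: "K \<in> components E X \<longleftrightarrow> (\<exists>x\<in>X. K = {y \<in> X. (x, y) \<in> (E \<inter> X \<times> X)\<^sup>*})"
  by (auto simp: components_def)

lemma comp_sub: "K \<in> components E X \<Longrightarrow> K \<subseteq> X"
  by (auto simp: components_def)

lemma comp_Union: "\<Union>(components E X) = X"
  by (auto simp: components_def)

lemma comp_nonempty: "K \<in> components E X \<Longrightarrow> K \<noteq> {}"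
  by (auto simp: components_def)

lemma sym_restr: "sym E \<Longrightarrow> sym (E \<inter> X \<times> X)"
  by (auto simp: sym_def)

lemma rtrancl_sym_swap: "sym R \<Longrightarrow> (a, b) \<in> R\<^sup>* \<Longrightarrow> (b, a) \<in> R\<^sup>*"
  by (metis converse_iff rtrancl_converseI sym_conv_converse_eq)

lemma comp_disj:
  assumes "sym E" "K1 \<in> components E X" "K2 \<in> components E X" "K1 \<noteq> K2"
  shows "K1 \<inter> K2 = {}"
proof (rule ccontr)
  let ?R = "E \<inter> X \<times> X"
  have sR: "sym ?R" using assms(1) by (rule sym_restr)
  assume "K1 \<inter> K2 \<noteq> {}"
  then obtain z where z: "z \<in> K1" "z \<in> K2" by blast
  obtain x where x: "x \<in> X" "K1 = {y \<in> X. (x, y) \<in> ?R\<^sup>*}" using assms(2) by (auto simp: comp_mem)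
  obtain y where y: "y \<in> X" "K2 = {v \<in> X. (y, v) \<in> ?R\<^sup>*}" using assms(3) by (auto simp: comp_mem)
  have "(x, z) \<in> ?R\<^sup>*" "(y, z) \<in> ?R\<^sup>*" using z x y by auto
  then have xy: "(x, y) \<in> ?R\<^sup>*" "(y, x) \<in> ?R\<^sup>*"
    using rtrancl_sym_swap[OF sR] by (meson rtrancl_trans)+
  have "K1 = K2" unfolding x y using xy by (auto intro: rtrancl_trans)
  then show False using assms(4) by simp
qed

lemma comp_conn:
  assumes "sym E" "K \<in> components E X"
  shows "conn E K"
proof -
  let ?R = "E \<inter> X \<times> X"
  obtain x where x: "x \<in> X" "K = {y \<in> X. (x, y) \<in> ?R\<^sup>*}" using assms(2) by (auto simp: comp_mem)
  have *: "(x, y) \<in> (E \<inter> K \<times> K)\<^sup>*" if "(x, y) \<in> ?R\<^sup>*" for y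
    using that
  proof (induction rule: rtrancl_induct)
    case base then show ?case by simp
  next
    case (step y z)
    have yK: "y \<in> K" using step(1) \<open>(y, z) \<in> ?R\<close> x(2) by blast
    have "(x, z) \<in> ?R\<^sup>*" using step(1) step(2) by (rule rtrancl.rtrancl_into_rtrancl)
    then have zK: "z \<in> K" using \<open>(y, z) \<in> ?R\<close> x(2) by blast
    have "(y, z) \<in> E \<inter> K \<times> K" using yK zK step(2) by blast
    then show ?case using step(3) by (rule rtrancl.rtrancl_into_rtrancl[rotated])
  qed
  have sK: "sym (E \<inter> K \<times> K)" using assms(1) by (rule sym_restr)
  show ?thesis unfolding conn_def
  proof (intro ballI)
    fix a b assume "a \<in> K" "b \<in> K"
    then have "(x, a) \<in> (E \<inter> K \<times> K)\<^sup>*" "(x, b) \<in> (E \<inter> K \<times> K)\<^sup>*" using * x by auto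
    then show "(a, b) \<in> (E \<inter> K \<times> K)\<^sup>*" using rtrancl_sym_swap[OF sK] by (meson rtrancl_trans)
  qed
qed

lemma comp_of_conn:
  assumes "conn E X" "X \<noteq> {}"
  shows "components E X = {X}"
proof -
  have "{y \<in> X. (x, y) \<in> (E \<inter> X \<times> X)\<^sup>*} = X" if "x \<in> X" for x
    using assms(1) that by (auto simp: conn_def)
  then show ?thesis using assms(2) unfolding components_def by auto
qed

lemma comp_restrict: "E \<inter> X \<times> X = E' \<inter> X \<times> X \<Longrightarrow> components E X = components E' X"
  by (simp add: components_def)

lemma comp_empty: "components E {} = {}"
  by (simp add: components_def)

lemma path_stays:
  assumes "(x, y) \<in> (E \<inter> (X1 \<union> X2) \<times> (X1 \<union> X2))\<^sup>*" "x \<in> X1"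
    "E \<inter> (X1 \<times> X2) = {}"
  shows "y \<in> X1 \<and> (x, y) \<in> (E \<inter> X1 \<times> X1)\<^sup>*"
  using assms(1)
proof (induction rule: rtrancl_induct)
  case base then show ?case using assms(2) by simp
next
  case (step y z)
  have "y \<in> X1" using step(3) by blast
  moreover have "(y, z) \<in> E" "z \<in> X1 \<union> X2" using step(2) by blast+
  ultimately have zX: "z \<in> X1" using assms(3) by blast
  have "(y, z) \<in> E \<inter> X1 \<times> X1" using \<open>y \<in> X1\<close> zX \<open>(y, z) \<in> E\<close> by blast
  then have "(x, z) \<in> (E \<inter> X1 \<times> X1)\<^sup>*" using step(3) by (meson rtrancl.rtrancl_into_rtrancl)
  then show ?case using zX by simp
qed

lemma comp_union:
  assumes "X1 \<inter> X2 = {}" "E \<inter> (X1 \<times> X2) = {}" "E \<inter> (X2 \<times> X1) = {}"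
  shows "components E (X1 \<union> X2) = components E X1 \<union> components E X2"
proof -
  let ?R = "E \<inter> (X1 \<union> X2) \<times> (X1 \<union> X2)"
  have mono1: "(E \<inter> X1 \<times> X1)\<^sup>* \<subseteq> ?R\<^sup>*" by (rule rtrancl_mono) auto
  have mono2: "(E \<inter> X2 \<times> X2)\<^sup>* \<subseteq> ?R\<^sup>*" by (rule rtrancl_mono) auto
  have e1: "{y \<in> X1 \<union> X2. (x, y) \<in> ?R\<^sup>*} = {y \<in> X1. (x, y) \<in> (E \<inter> X1 \<times> X1)\<^sup>*}" if "x \<in> X1" for x
  proof (intro equalityI subsetI)
    fix y assume "y \<in> {y \<in> X1 \<union> X2. (x, y) \<in> ?R\<^sup>*}"
    then have "(x, y) \<in> ?R\<^sup>*" by simp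
    from path_stays[OF this that assms(2)] show "y \<in> {y \<in> X1. (x, y) \<in> (E \<inter> X1 \<times> X1)\<^sup>*}" by simp
  next
    fix y assume "y \<in> {y \<in> X1. (x, y) \<in> (E \<inter> X1 \<times> X1)\<^sup>*}"
    then show "y \<in> {y \<in> X1 \<union> X2. (x, y) \<in> ?R\<^sup>*}" using mono1 by auto
  qed
  have e2: "{y \<in> X1 \<union> X2. (x, y) \<in> ?R\<^sup>*} = {y \<in> X2. (x, y) \<in> (E \<inter> X2 \<times> X2)\<^sup>*}" if "x \<in> X2" for x
  proof -
    have RR: "?R = E \<inter> (X2 \<union> X1) \<times> (X2 \<union> X1)" by blast
    show ?thesis
    proof (intro equalityI subsetI)
      fix y assume "y \<in> {y \<in> X1 \<union> X2. (x, y) \<in> ?R\<^sup>*}"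
      then have "(x, y) \<in> (E \<inter> (X2 \<union> X1) \<times> (X2 \<union> X1))\<^sup>*" using RR by simp
      from path_stays[OF this that assms(3)] show "y \<in> {y \<in> X2. (x, y) \<in> (E \<inter> X2 \<times> X2)\<^sup>*}" by simp
    next
      fix y assume "y \<in> {y \<in> X2. (x, y) \<in> (E \<inter> X2 \<times> X2)\<^sup>*}"
      then show "y \<in> {y \<in> X1 \<union> X2. (x, y) \<in> ?R\<^sup>*}" using mono2 by auto
    qed
  qed
  show ?thesis
  proof (intro equalityI subsetI)
    fix K assume "K \<in> components E (X1 \<union> X2)"
    then obtain x where x: "x \<in> X1 \<union> X2" "K = {y \<in> X1 \<union> X2. (x, y) \<in> ?R\<^sup>*}" by (auto simp: comp_mem)
    show "K \<in> components E X1 \<union> components E X2"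
    proof (cases "x \<in> X1")
      case True then show ?thesis using e1 x by (auto simp: comp_mem)
    next
      case False then have "x \<in> X2" using x by simp
      then show ?thesis using e2 x by (auto simp: comp_mem)
    qed
  next
    fix K assume "K \<in> components E X1 \<union> components E X2"
    then show "K \<in> components E (X1 \<union> X2)"
    proof
      assume "K \<in> components E X1"
      then obtain x where "x \<in> X1" "K = {y \<in> X1. (x, y) \<in> (E \<inter> X1 \<times> X1)\<^sup>*}" by (auto simp: comp_mem)
      then show ?thesis using e1[of x] unfolding comp_mem by (intro bexI[of _ x]) auto
    next
      assume "K \<in> components E X2"
      then obtain x where "x \<in> X2" "K = {y \<in> X2. (x, y) \<in> (E \<inter> X2 \<times> X2)\<^sup>*}" by (auto simp: comp_mem)
      then show ?thesis using e2[of x] unfolding comp_mem by (intro bexI[of _ x]) auto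
    qed
  qed
qed

lemma st_cases:
  "search_tree E S (Node r ts) \<Longrightarrow> r \<in> S \<and> distinct (map vset ts)
     \<and> set (map vset ts) = components E (S - {r}) \<and> (\<forall>t\<in>set ts. search_tree E (vset t) t)"
  by (erule search_tree.cases) auto

lemma st_vset: "search_tree E S t \<Longrightarrow> vset t = S"
proof (induction rule: search_tree.induct)
  case (1 r S ts E)
  have "(\<Union>t\<in>set ts. vset t) = \<Union>(set (map vset ts))" by simp
  also have "\<dots> = S - {r}" using 1(3) comp_Union by metis
  finally show ?case using 1(1) by auto
qed

lemma finite_vset: "finite (vset t)"
  by (induction t rule: vset.induct) auto

lemma st_child:
  assumes "search_tree E S (Node r ts)" "t \<in> set ts"
  shows "search_tree E (vset t) t \<and> vset t \<in> components E (S - {r}) \<and> vset t \<subseteq> S - {r} \<and> r \<notin> vset t"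
proof -
  have "vset t \<in> components E (S - {r})" using st_cases[OF assms(1)] assms(2)
    by (metis image_eqI set_map)
  then show ?thesis using st_cases[OF assms(1)] assms(2) comp_sub by blast
qed

lemma st_child_disj:
  assumes "sym E" "search_tree E S (Node r ts)" "t1 \<in> set ts" "t2 \<in> set ts" "t1 \<noteq> t2"
  shows "vset t1 \<inter> vset t2 = {}"
proof -
  have "inj_on vset (set ts)" using st_cases[OF assms(2)] by (simp add: distinct_map)
  then have "vset t1 \<noteq> vset t2" using assms(3-5) by (meson inj_onD)
  then show ?thesis using comp_disj[OF assms(1)] st_child[OF assms(2)] assms(3,4) by blast
qed

lemma st_children_union:
  assumes "search_tree E S (Node r ts)"
  shows "S - {r} = (\<Union>t\<in>set ts. vset t)"
proof -
  have "(\<Union>t\<in>set ts. vset t) = \<Union>(set (map vset ts))" by simp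
  also have "\<dots> = S - {r}" using st_cases[OF assms] comp_Union by metis
  finally show ?thesis by simp
qed

lemma st_sum_split:
  assumes "sym E" "search_tree E S (Node r ts)"
  shows "sum f (S - {r}) = (\<Sum>t\<in>set ts. sum f (vset t))"
  unfolding st_children_union[OF assms(2)]
  by (rule sum.UNION_disjoint) (auto simp: finite_vset dest: st_child_disj[OF assms])

lemma st_sumlist:
  assumes "search_tree E S (Node r ts)"
  shows "sum_list (map g ts) = (\<Sum>t\<in>set ts. g t)"
proof -
  have "distinct ts" using st_cases[OF assms] by (simp add: distinct_map)
  then show ?thesis by (simp add: sum_list_distinct_conv_sum_set)
qed

lemma st_induct[consumes 1, case_names Node]:
  assumes "search_tree E S t"
  and "\<And>r S ts. r \<in> S \<Longrightarrow> distinct (map vset ts) \<Longrightarrow> set (map vset ts) = components E (S - {r})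
        \<Longrightarrow> (\<forall>t\<in>set ts. search_tree E (vset t) t \<and> P (vset t) t) \<Longrightarrow> P S (Node r ts)"
  shows "P S t"
proof -
  have "E' = E \<longrightarrow> P S t" if "search_tree E' S t" for E'
    using that
  proof (induction rule: search_tree.induct)
    case (1 r S ts E')
    show ?case
    proof
      assume e: "E' = E"
      show "P S (Node r ts)" using 1 e assms(2)[of r S ts] by blast
    qed
  qed
  then show ?thesis using assms(1) by blast
qed

fun anc :: "'a rtree \<Rightarrow> 'a \<Rightarrow> 'a set" where
  "anc (Node r ts) x = (if x \<in> vset (Node r ts) then {r} else {}) \<union> (\<Union>t\<in>set ts. anc t x)"

lemma anc_sub: "anc t x \<subseteq> vset t"
  by (induction t x rule: anc.induct) auto

lemma anc_empty: "x \<notin> vset t \<Longrightarrow> anc t x = {}"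
  by (induction t x rule: anc.induct) auto

lemma anc_self: "x \<in> vset t \<Longrightarrow> x \<in> anc t x"
  by (induction t x rule: anc.induct) auto

lemma finite_anc: "finite (anc t x)"
  using anc_sub finite_vset by (rule finite_subset)

lemma anc_child:
  assumes "sym E" "search_tree E S (Node r ts)" "t \<in> set ts" "x \<in> vset t"
  shows "anc (Node r ts) x = insert r (anc t x)"
proof -
  have "anc t' x = {}" if "t' \<in> set ts" "t' \<noteq> t" for t'
  proof -
    have "vset t' \<inter> vset t = {}" by (rule st_child_disj[OF assms(1,2) that(1) assms(3) that(2)])
    then have "x \<notin> vset t'" using assms(4) by blast
    then show ?thesis by (rule anc_empty)
  qed
  then have "(\<Union>t'\<in>set ts. anc t' x) = anc t x" using assms(3) by auto
  moreover have "x \<in> vset (Node r ts)" using assms(3,4) by auto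
  ultimately show ?thesis by simp
qed

lemma anc_root:
  assumes "search_tree E S (Node r ts)"
  shows "anc (Node r ts) r = {r}"
proof -
  have "anc t r = {}" if "t \<in> set ts" for t
  proof -
    have "r \<notin> vset t" using st_child[OF assms that] by blast
    then show ?thesis by (rule anc_empty)
  qed
  then have "(\<Union>t\<in>set ts. anc t r) = {}" by blast
  then show ?thesis by simp
qed

lemma anc_mono_child: "t \<in> set ts \<Longrightarrow> anc t x \<subseteq> anc (Node r ts) x"
  by auto

lemma st_cost:
  assumes "sym E" "search_tree E S T"
  shows "cost_at w d T = (\<Sum>x\<in>S. w x * (real d + real (card (anc T x)) - 1))"
  using assms(2)
proof (induction arbitrary: d rule: st_induct)
  case (Node r S ts)
  have st: "search_tree E S (Node r ts)" using Node by (intro search_tree.intros) auto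
  let ?f = "\<lambda>x. w x * (real d + real (card (anc (Node r ts) x)) - 1)"
  have fin: "finite S" using st_vset[OF st] finite_vset by metis
  have "(\<Sum>x\<in>S. ?f x) = ?f r + sum ?f (S - {r})"
    using fin Node(1) by (rule sum.remove)
  also have "?f r = real d * w r" using anc_root[OF st] by (simp del: anc.simps)
  also have "sum ?f (S - {r}) = (\<Sum>t\<in>set ts. sum ?f (vset t))" by (rule st_sum_split[OF assms(1) st])
  also have "\<dots> = (\<Sum>t\<in>set ts. cost_at w (Suc d) t)"
  proof (rule sum.cong[OF refl])
    fix t assume t: "t \<in> set ts"
    have "sum ?f (vset t) = (\<Sum>x\<in>vset t. w x * (real (Suc d) + real (card (anc t x)) - 1))"
    proof (rule sum.cong[OF refl])
      fix x assume x: "x \<in> vset t"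
      have "r \<notin> vset t" using st_child[OF st t] by blast
      then have "r \<notin> anc t x" using anc_sub[of t x] by blast
      then have "card (anc (Node r ts) x) = Suc (card (anc t x))"
        using anc_child[OF assms(1) st t x] finite_anc[of t x] by simp
      then show "?f x = w x * (real (Suc d) + real (card (anc t x)) - 1)" by simp
    qed
    also have "\<dots> = cost_at w (Suc d) t" using Node(4) t by simp
    finally show "sum ?f (vset t) = cost_at w (Suc d) t" .
  qed
  also have "\<dots> = sum_list (map (cost_at w (Suc d)) ts)" by (simp only: st_sumlist[OF st])
  finally show ?case by simp
qed

lemma st_top0:
  assumes "sym E" "search_tree E S T"
  shows "\<forall>H. H \<subseteq> S \<longrightarrow> H \<noteq> {} \<longrightarrow> conn E H \<longrightarrow> (\<exists>r\<in>H. \<forall>x\<in>H. r \<in> anc T x)"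
  using assms(2)
proof (induction rule: st_induct)
  case (Node r S ts)
  have st: "search_tree E S (Node r ts)" using Node by (intro search_tree.intros) auto
  show ?case
  proof (intro allI impI)
    fix H assume H: "H \<subseteq> S" "H \<noteq> {}" "conn E H"
    show "\<exists>r'\<in>H. \<forall>x\<in>H. r' \<in> anc (Node r ts) x"
    proof (cases "r \<in> H")
      case True
      have "r \<in> anc (Node r ts) x" if "x \<in> H" for x
      proof -
        have "x \<in> vset (Node r ts)" using that H(1) st_vset[OF st] by blast
        then show ?thesis by simp
      qed
      then show ?thesis using True by blast
    next
      case False
      then have HS: "H \<subseteq> S - {r}" using H(1) by blast
      obtain h where h: "h \<in> H" using H(2) by blast
      let ?R = "E \<inter> (S - {r}) \<times> (S - {r})"
      define K where "K = {y \<in> S - {r}. (h, y) \<in> ?R\<^sup>*}"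
      have Kc: "K \<in> components E (S - {r})" using h HS unfolding comp_mem K_def by blast
      have mono: "(E \<inter> H \<times> H)\<^sup>* \<subseteq> ?R\<^sup>*" using HS by (intro rtrancl_mono) blast
      have HK: "H \<subseteq> K"
      proof
        fix y assume y: "y \<in> H"
        then have "(h, y) \<in> (E \<inter> H \<times> H)\<^sup>*" using H(3) h unfolding conn_def by blast
        then have "(h, y) \<in> ?R\<^sup>*" using mono by blast
        then show "y \<in> K" using y HS unfolding K_def by blast
      qed
      obtain t where t: "t \<in> set ts" "vset t = K" using Kc Node(3) by (metis imageE set_map)
      have IH: "\<forall>H. H \<subseteq> vset t \<longrightarrow> H \<noteq> {} \<longrightarrow> conn E H \<longrightarrow> (\<exists>r\<in>H. \<forall>x\<in>H. r \<in> anc t x)"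
        using Node(4) t(1) by blast
      have "\<exists>r'\<in>H. \<forall>x\<in>H. r' \<in> anc t x"
        using IH HK t(2) H(2) H(3) by blast
      then obtain r' where r': "r' \<in> H" "\<forall>x\<in>H. r' \<in> anc t x" by blast
      then show ?thesis using anc_mono_child[OF t(1)] by blast
    qed
  qed
qed

lemma st_top:
  assumes "sym E" "search_tree E S T" "H \<subseteq> S" "H \<noteq> {}" "conn E H"
  shows "\<exists>r\<in>H. \<forall>x\<in>H. r \<in> anc T x"
  using st_top0[OF assms(1,2)] assms(3-5) by blast

definition phi :: "('a \<Rightarrow> real) \<Rightarrow> 'a rtree \<Rightarrow> 'a set \<Rightarrow> real" where
  "phi w T H = (\<Sum>x\<in>H. w x * real (card (anc T x \<inter> H)))"

lemma cost_shift1: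
  assumes "sym E" "search_tree E S t"
  shows "cost_at w (Suc 1) t = cost_at w 1 t + sum w S"
proof -
  have "cost_at w (Suc 1) t = (\<Sum>x\<in>S. w x * (real (Suc 1) + real (card (anc t x)) - 1))"
    by (rule st_cost[OF assms])
  also have "\<dots> = (\<Sum>x\<in>S. w x * (real 1 + real (card (anc t x)) - 1) + w x)"
    by (rule sum.cong) (auto simp: algebra_simps)
  also have "\<dots> = (\<Sum>x\<in>S. w x * (real 1 + real (card (anc t x)) - 1)) + sum w S"
    by (simp add: sum.distrib)
  also have "(\<Sum>x\<in>S. w x * (real 1 + real (card (anc t x)) - 1)) = cost_at w 1 t"
    by (rule st_cost[OF assms, symmetric])
  finally show ?thesis .
qed

lemma cost_root:
  assumes "sym E" "search_tree E H (Node c ts)"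
  shows "cost_at w 1 (Node c ts) = w c + (\<Sum>t\<in>set ts. cost_at w 1 t + sum w (vset t))"
proof -
  have "cost_at w 1 (Node c ts) = w c + sum_list (map (cost_at w (Suc 1)) ts)" by simp
  also have "sum_list (map (cost_at w (Suc 1)) ts) = (\<Sum>t\<in>set ts. cost_at w (Suc 1) t)"
    by (rule st_sumlist[OF assms(2)])
  also have "\<dots> = (\<Sum>t\<in>set ts. cost_at w 1 t + sum w (vset t))"
    by (rule sum.cong[OF refl], rule cost_shift1[OF assms(1)]) (use st_child[OF assms(2)] in blast)
  finally show ?thesis .
qed

lemma main_ineq:
  assumes sE: "sym E" and sT: "search_tree E S T" and wnn: "\<forall>x\<in>S. w x \<ge> 0"
  shows "search_tree E H C \<Longrightarrow> (\<forall>s\<in>subtrees C. is_centroid E (vset s) w (root s)) \<longrightarrow> H \<subseteq> S \<longrightarrow> conn E H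
     \<longrightarrow> cost_at w 1 C \<le> 2 * phi w T H - sum w H"
proof (induction rule: st_induct)
  case (Node c H ts)
  have st: "search_tree E H (Node c ts)" using Node by (intro search_tree.intros) auto
  show ?case
  proof (intro impI)
    assume cent: "\<forall>s\<in>subtrees (Node c ts). is_centroid E (vset s) w (root s)"
      and HS: "H \<subseteq> S" and cH: "conn E H"
    have fin: "finite H" using st_vset[OF st] finite_vset by metis
    have cH': "c \<in> H" using Node(1) .
    have wH: "\<forall>x\<in>H. w x \<ge> 0" using wnn HS by blast
    have IH: "cost_at w 1 t \<le> 2 * phi w T (vset t) - sum w (vset t)" if t: "t \<in> set ts" for t
    proof -
      have ch: "search_tree E (vset t) t \<and> vset t \<in> components E (H - {c}) \<and> vset t \<subseteq> H - {c} \<and> c \<notin> vset t"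
        by (rule st_child[OF st t])
      have ih: "(\<forall>s\<in>subtrees t. is_centroid E (vset s) w (root s)) \<longrightarrow> vset t \<subseteq> S \<longrightarrow> conn E (vset t)
          \<longrightarrow> cost_at w 1 t \<le> 2 * phi w T (vset t) - sum w (vset t)"
        using Node(4) t by blast
      have "subtrees t \<subseteq> subtrees (Node c ts)" using t by auto
      then have c1: "\<forall>s\<in>subtrees t. is_centroid E (vset s) w (root s)" using cent by blast
      have c2: "vset t \<subseteq> S" using ch HS by blast
      have c3: "conn E (vset t)" using comp_conn[OF sE] ch by blast
      show ?thesis using ih c1 c2 c3 by blast
    qed
    have costC: "cost_at w 1 (Node c ts) = w c + (\<Sum>t\<in>set ts. cost_at w 1 t + sum w (vset t))"
      by (rule cost_root[OF sE st])
    also have "\<dots> \<le> w c + (\<Sum>t\<in>set ts. 2 * phi w T (vset t))"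
      using IH by (intro add_left_mono sum_mono) force
    finally have cC: "cost_at w 1 (Node c ts) \<le> w c + 2 * (\<Sum>t\<in>set ts. phi w T (vset t))"
      by (simp add: sum_distrib_left)
    obtain r where r: "r \<in> H" "\<forall>x\<in>H. r \<in> anc T x"
      using st_top[OF sE sT HS _ cH] cH' by blast
    have vT: "vset T = S" by (rule st_vset[OF sT])
    let ?g = "\<lambda>x. w x * real (card (anc T x \<inter> H))"
    have phiH: "phi w T H = ?g c + (\<Sum>t\<in>set ts. sum ?g (vset t))"
      unfolding phi_def using sum.remove[OF fin cH', of ?g] st_sum_split[OF sE st, of ?g] by simp
    define b where "b t = (if r \<in> vset t then 0 else sum w (vset t))" for t
    have child_bd: "sum ?g (vset t) \<ge> phi w T (vset t) + b t" if t: "t \<in> set ts" for t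
    proof -
      have sub: "vset t \<subseteq> H" using st_child[OF st t] by blast
      have pt: "?g x \<ge> w x * real (card (anc T x \<inter> vset t)) + (if r \<in> vset t then 0 else w x)"
        if x: "x \<in> vset t" for x
      proof -
        have wx: "w x \<ge> 0" using wH sub x by blast
        have fA: "finite (anc T x \<inter> H)" using finite_anc[of T x] by blast
        have "real (card (anc T x \<inter> vset t)) + (if r \<in> vset t then 0 else 1) \<le> real (card (anc T x \<inter> H))"
        proof (cases "r \<in> vset t")
          case True
          have "card (anc T x \<inter> vset t) \<le> card (anc T x \<inter> H)"
            using fA sub by (intro card_mono) auto
          then show ?thesis using True by simp
        next
          case False
          have rin: "r \<in> anc T x \<inter> H" using r sub x by blast
          have "insert r (anc T x \<inter> vset t) \<subseteq> anc T x \<inter> H" using rin sub by blast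
          then have "card (insert r (anc T x \<inter> vset t)) \<le> card (anc T x \<inter> H)"
            using fA by (rule card_mono[rotated])
          moreover have "card (insert r (anc T x \<inter> vset t)) = Suc (card (anc T x \<inter> vset t))"
            using False finite_anc[of T x] by simp
          ultimately show ?thesis using False by simp
        qed
        then have "w x * (real (card (anc T x \<inter> vset t)) + (if r \<in> vset t then 0 else 1)) \<le> ?g x"
          using wx by (simp add: mult_left_mono)
        then show ?thesis by (simp add: algebra_simps split: if_splits)
      qed
      have "sum ?g (vset t) \<ge> (\<Sum>x\<in>vset t. w x * real (card (anc T x \<inter> vset t)) + (if r \<in> vset t then 0 else w x))"
        using pt by (intro sum_mono) auto
      also have "(\<Sum>x\<in>vset t. w x * real (card (anc T x \<inter> vset t)) + (if r \<in> vset t then 0 else w x))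
          = phi w T (vset t) + b t"
        unfolding phi_def b_def by (simp add: sum.distrib)
      finally show ?thesis .
    qed
    have sumch: "(\<Sum>t\<in>set ts. sum ?g (vset t)) \<ge> (\<Sum>t\<in>set ts. phi w T (vset t)) + (\<Sum>t\<in>set ts. b t)"
      using child_bd by (simp add: sum.distrib[symmetric] sum_mono)
    have Ks: "(\<Sum>t\<in>set ts. sum w (vset t)) = sum w H - w c"
      using sum.remove[OF fin cH', of w] st_sum_split[OF sE st, of w] by simp
    have "c \<in> vset T" using HS cH' vT by blast
    then have cA: "c \<in> anc T c" by (rule anc_self)
    have phiH2: "phi w T H \<ge> ?g c + (\<Sum>t\<in>set ts. phi w T (vset t)) + (\<Sum>t\<in>set ts. b t)"
      using phiH sumch by linarith
    have wc: "w c \<ge> 0" using wH cH' by blast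
    have wHc: "w c \<le> sum w H" by (rule member_le_sum) (use wH cH' fin in auto)
    show "cost_at w 1 (Node c ts) \<le> 2 * phi w T H - sum w H"
    proof (cases "r = c")
      case True
      have "b t = sum w (vset t)" if "t \<in> set ts" for t
        using st_child[OF st that] True unfolding b_def by auto
      then have bs: "(\<Sum>t\<in>set ts. b t) = sum w H - w c" using Ks by simp
      have "anc T c \<inter> H \<noteq> {}" using cA cH' by blast
      then have "card (anc T c \<inter> H) \<ge> 1" using finite_anc[of T c] by (simp add: Suc_le_eq card_gt_0_iff)
      then have h1: "(1::real) \<le> real (card (anc T c \<inter> H))" by simp
      have "w c * 1 \<le> w c * real (card (anc T c \<inter> H))" by (rule mult_left_mono[OF h1 wc])
      then have "?g c \<ge> w c" by simp
      then show ?thesis using phiH2 bs cC wHc by linarith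
    next
      case False
      then have "r \<in> H - {c}" using r by blast
      then obtain t0 where t0: "t0 \<in> set ts" "r \<in> vset t0" using st_children_union[OF st] by blast
      have others: "r \<notin> vset t" if "t \<in> set ts" "t \<noteq> t0" for t
        using st_child_disj[OF sE st that(1) t0(1) that(2)] t0(2) by blast
      have "(\<Sum>t\<in>set ts. b t) = b t0 + (\<Sum>t\<in>set ts - {t0}. b t)"
        using sum.remove[OF _ t0(1)] by simp
      also have "(\<Sum>t\<in>set ts - {t0}. b t) = (\<Sum>t\<in>set ts - {t0}. sum w (vset t))"
        using others unfolding b_def by (intro sum.cong) auto
      also have "b t0 = 0" using t0 unfolding b_def by simp
      also have "(\<Sum>t\<in>set ts - {t0}. sum w (vset t)) = (\<Sum>t\<in>set ts. sum w (vset t)) - sum w (vset t0)"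
        using sum.remove[OF _ t0(1), of "\<lambda>t. sum w (vset t)"] by simp
      finally have bs: "(\<Sum>t\<in>set ts. b t) = sum w H - w c - sum w (vset t0)" using Ks by simp
      have "is_centroid E (vset (Node c ts)) w (root (Node c ts))" using cent by simp
      then have "is_centroid E H w c" using st_vset[OF st] by simp
      moreover have "vset t0 \<in> components E (H - {c})" using st_child[OF st t0(1)] by blast
      ultimately have half: "sum w (vset t0) \<le> sum w H / 2" unfolding is_centroid_def by blast
      have "{c, r} \<subseteq> anc T c \<inter> H" using cA cH' r by blast
      then have "card {c, r} \<le> card (anc T c \<inter> H)" using finite_anc[of T c] by (intro card_mono) auto
      then have "card (anc T c \<inter> H) \<ge> 2" using False by simp
      then have h2: "(2::real) \<le> real (card (anc T c \<inter> H))" by simp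
      have "w c * 2 \<le> w c * real (card (anc T c \<inter> H))" by (rule mult_left_mono[OF h2 wc])
      then have "?g c \<ge> 2 * w c" by simp
      then show ?thesis using phiH2 bs cC half wc by linarith
    qed
  qed
qed

lemma two_approx:
  assumes "sym E" "search_tree E S T" "centroid_tree S E w C" "conn E S" "\<forall>x\<in>S. w x \<ge> 0"
  shows "cost w C \<le> 2 * cost w T - sum w S"
proof -
  have stC: "search_tree E S C" and cent: "\<forall>s\<in>subtrees C. is_centroid E (vset s) w (root s)"
    using assms(3) unfolding centroid_tree_def by auto
  have "cost_at w 1 C \<le> 2 * phi w T S - sum w S"
    using main_ineq[OF assms(1,2,5) stC] cent assms(4) by blast
  moreover have "phi w T S = cost_at w 1 T"
  proof -
    have "phi w T S = (\<Sum>x\<in>S. w x * (real 1 + real (card (anc T x)) - 1))"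
      unfolding phi_def
    proof (rule sum.cong[OF refl])
      fix x assume "x \<in> S"
      have "anc T x \<subseteq> S" using anc_sub st_vset[OF assms(2)] by metis
      then have "anc T x \<inter> S = anc T x" by blast
      then show "w x * real (card (anc T x \<inter> S)) = w x * (real 1 + real (card (anc T x)) - 1)" by simp
    qed
    also have "\<dots> = cost_at w 1 T" by (rule st_cost[OF assms(1,2), symmetric])
    finally show ?thesis .
  qed
  ultimately show ?thesis unfolding cost_def by simp
qed

inductive sbt :: "('a \<Rightarrow> real) \<Rightarrow> real \<Rightarrow> nat \<Rightarrow> 'a set \<Rightarrow> ('a \<times> 'a) set \<Rightarrow> 'a \<Rightarrow> bool"
  for u :: "'a \<Rightarrow> real" and \<delta> :: real where
  base: "u d = 1 \<Longrightarrow> sbt u \<delta> 0 {d} {} d"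
| step: "sbt u \<delta> k A E1 d1 \<Longrightarrow> sbt u \<delta> k B E2 d2 \<Longrightarrow> A \<inter> B = {} \<Longrightarrow> c \<notin> A \<Longrightarrow> c \<notin> B \<Longrightarrow> u c = \<delta>
     \<Longrightarrow> sbt u \<delta> (Suc k) (A \<union> B \<union> {c}) (E1 \<union> E2 \<union> {(d1, c), (c, d1), (d2, c), (c, d2)}) d1"

fun Wf :: "real \<Rightarrow> nat \<Rightarrow> real" where
  "Wf \<delta> 0 = 1"
| "Wf \<delta> (Suc k) = 2 * Wf \<delta> k + \<delta>"

fun cf :: "real \<Rightarrow> nat \<Rightarrow> real" where
  "cf \<delta> 0 = 1"
| "cf \<delta> (Suc k) = Wf \<delta> (Suc k) + 2 * cf \<delta> k"

fun tf :: "real \<Rightarrow> nat \<Rightarrow> real" where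
  "tf \<delta> 0 = 1"
| "tf \<delta> (Suc k) = 2 * tf \<delta> k + Wf \<delta> k + 3 * \<delta>"

lemma conn_from_root:
  assumes "sym E" "\<forall>x\<in>X. (d, x) \<in> (E \<inter> X \<times> X)\<^sup>*"
  shows "conn E X"
  unfolding conn_def
proof (intro ballI)
  fix a b assume "a \<in> X" "b \<in> X"
  then have "(d, a) \<in> (E \<inter> X \<times> X)\<^sup>*" "(d, b) \<in> (E \<inter> X \<times> X)\<^sup>*" using assms(2) by auto
  then show "(a, b) \<in> (E \<inter> X \<times> X)\<^sup>*"
    using rtrancl_sym_swap[OF sym_restr[OF assms(1)]] by (meson rtrancl_trans)
qed

lemma sbt_basic:
  assumes "sbt u \<delta> k S E d"
  shows "finite S \<and> d \<in> S \<and> E \<subseteq> S \<times> S \<and> sym E \<and> irrefl E \<and> (\<forall>x\<in>S. (d, x) \<in> E\<^sup>*)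
    \<and> finite E \<and> card E = 2 * (card S - 1) \<and> sum u S = Wf \<delta> k \<and> card S = 2 ^ (k + 1) - 1
    \<and> (\<forall>x\<in>S. u x = 1 \<or> u x = \<delta>)"
  using assms
proof (induction rule: sbt.induct)
  case (base d)
  then show ?case by (auto simp: sym_def irrefl_def)
next
  case (step k A E1 d1 B E2 d2 c)
  let ?N = "{(d1, c), (c, d1), (d2, c), (c, d2)}"
  let ?E = "E1 \<union> E2 \<union> ?N"
  have fA: "finite A" "finite B" using step by auto
  have dA: "d1 \<in> A" "d2 \<in> B" using step by auto
  have neq: "d1 \<noteq> c" "d2 \<noteq> c" "d1 \<noteq> d2" using dA step(3-5) by auto
  have sub: "?E \<subseteq> (A \<union> B \<union> {c}) \<times> (A \<union> B \<union> {c})" using step dA by auto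
  have sy: "sym ?E" using step by (auto simp: sym_def)
  have ir: "irrefl ?E" using step neq by (auto simp: irrefl_def)
  have m1: "E1\<^sup>* \<subseteq> ?E\<^sup>*" by (rule rtrancl_mono) auto
  have m2: "E2\<^sup>* \<subseteq> ?E\<^sup>*" by (rule rtrancl_mono) auto
  have reach: "\<forall>x\<in>A \<union> B \<union> {c}. (d1, x) \<in> ?E\<^sup>*"
  proof
    fix x assume x: "x \<in> A \<union> B \<union> {c}"
    have dc: "(d1, c) \<in> ?E\<^sup>*" by auto
    have cd2: "(c, d2) \<in> ?E\<^sup>*" by auto
    show "(d1, x) \<in> ?E\<^sup>*"
    proof (cases "x \<in> A")
      case True then show ?thesis using step m1 by blast
    next
      case False
      show ?thesis
      proof (cases "x = c")
        case True then show ?thesis using dc by simp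
      next
        case False
        then have "x \<in> B" using x \<open>x \<notin> A\<close> by blast
        then have "(d2, x) \<in> ?E\<^sup>*" using step m2 by blast
        then show ?thesis using dc cd2 by (meson rtrancl_trans)
      qed
    qed
  qed
  have fE: "finite E1" "finite E2" using step by auto
  have dis1: "E1 \<inter> E2 = {}" using step by blast
  have dis2: "(E1 \<union> E2) \<inter> ?N = {}" using step by blast
  have cN: "card ?N = 4" using neq by auto
  have cE: "card ?E = card E1 + card E2 + 4"
    using card_Un_disjoint[OF _ _ dis2] card_Un_disjoint[OF fE dis1] fE cN by simp
  have cS: "card (A \<union> B \<union> {c}) = card A + card B + 1"
    using card_Un_disjoint[OF fA step(3)] step(4,5) fA by simp
  have cA1: "card A \<ge> 1" "card B \<ge> 1" using step by auto
  have "card ?E = 2 * (card (A \<union> B \<union> {c}) - 1)" using cE cS step cA1 by simp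
  moreover have "sum u (A \<union> B \<union> {c}) = Wf \<delta> (Suc k)"
  proof -
    have "sum u (A \<union> B \<union> {c}) = sum u (A \<union> B) + u c"
      using step(4,5) fA by (simp add: sum.insert_if)
    also have "sum u (A \<union> B) = sum u A + sum u B" using sum.union_disjoint[OF fA step(3)] .
    finally show ?thesis using step by simp
  qed
  moreover have "card (A \<union> B \<union> {c}) = 2 ^ (Suc k + 1) - 1"
  proof -
    have p: "(2::nat) ^ k \<ge> 1" by simp
    have ab: "card A = 2 * 2 ^ k - 1" "card B = 2 * 2 ^ k - 1" using step by auto
    have e: "(2::nat) ^ (Suc k + 1) = 4 * 2 ^ k" by simp
    show ?thesis unfolding e using cS p ab by linarith
  qed
  ultimately show ?case using sub sy ir reach fA fE step dA by auto
qed

lemma restr_sub: "E \<inter> S \<times> S = E' \<inter> S \<times> S \<Longrightarrow> X \<subseteq> S \<Longrightarrow> E \<inter> X \<times> X = E' \<inter> X \<times> X"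
  by blast

lemma st_transfer:
  assumes "search_tree E S t" "E \<inter> S \<times> S = E' \<inter> S \<times> S"
  shows "search_tree E' S t"
proof -
  have "E \<inter> S \<times> S = E' \<inter> S \<times> S \<longrightarrow> search_tree E' S t"
    using assms(1)
  proof (induction rule: st_induct)
    case (Node r S ts)
    have st: "search_tree E S (Node r ts)" using Node by (intro search_tree.intros) auto
    show ?case
    proof
      assume R: "E \<inter> S \<times> S = E' \<inter> S \<times> S"
      have c: "components E (S - {r}) = components E' (S - {r})"
        by (rule comp_restrict, rule restr_sub[OF R]) blast
      have ch: "search_tree E' (vset t) t" if t: "t \<in> set ts" for t
      proof -
        have "vset t \<subseteq> S" using st_child[OF st t] by blast
        then have "E \<inter> vset t \<times> vset t = E' \<inter> vset t \<times> vset t" by (rule restr_sub[OF R])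
        then show ?thesis using Node(4) t by blast
      qed
      show "search_tree E' S (Node r ts)"
        using Node(1,2,3) c ch by (intro search_tree.intros) auto
    qed
  qed
  then show ?thesis using assms(2) by blast
qed

lemma subtrees_vset: "s \<in> subtrees t \<Longrightarrow> vset s \<subseteq> vset t"
  by (induction t rule: vset.induct) auto

lemma subtrees_self: "t \<in> subtrees t"
  by (cases t) auto

lemma centroid_transfer:
  assumes "centroid_tree S E u C" "E \<inter> S \<times> S = E' \<inter> S \<times> S"
  shows "centroid_tree S E' u C"
proof -
  have st: "search_tree E S C" and cent: "\<forall>s\<in>subtrees C. is_centroid E (vset s) u (root s)"
    using assms(1) unfolding centroid_tree_def by auto
  have vC: "vset C = S" by (rule st_vset[OF st])
  have "is_centroid E' (vset s) u (root s)" if s: "s \<in> subtrees C" for s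
  proof -
    have "vset s - {root s} \<subseteq> S" using subtrees_vset[OF s] vC by blast
    then have "components E (vset s - {root s}) = components E' (vset s - {root s})"
      by (intro comp_restrict restr_sub[OF assms(2)])
    then show ?thesis using cent s unfolding is_centroid_def by auto
  qed
  then show ?thesis using st_transfer[OF st assms(2)] unfolding centroid_tree_def by auto
qed

lemma st_leaf: "search_tree E {c} (Node c [])"
  by (rule search_tree.intros) (auto simp: comp_empty)

lemma conn_single: "conn E {c}"
  unfolding conn_def by auto

lemma sbt_search:
  assumes "sbt u \<delta> k S E d"
  shows "\<exists>T. search_tree E S T \<and> root T = d \<and> cost_at u 1 T = tf \<delta> k"
  using assms
proof (induction rule: sbt.induct)
  case (base d)
  have "search_tree {} {d} (Node d [])" by (rule st_leaf)
  moreover have "cost_at u 1 (Node d []) = tf \<delta> 0" using base by simp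
  ultimately show ?case by auto
next
  case (step k A E1 d1 B E2 d2 c)
  let ?N = "{(d1, c), (c, d1), (d2, c), (c, d2)}"
  define E where "E = E1 \<union> E2 \<union> ?N"
  have bA: "finite A \<and> d1 \<in> A \<and> E1 \<subseteq> A \<times> A \<and> sym E1 \<and> irrefl E1 \<and> (\<forall>x\<in>A. (d1, x) \<in> E1\<^sup>*)
    \<and> finite E1 \<and> card E1 = 2 * (card A - 1) \<and> sum u A = Wf \<delta> k \<and> card A = 2 ^ (k + 1) - 1
    \<and> (\<forall>x\<in>A. u x = 1 \<or> u x = \<delta>)" by (rule sbt_basic[OF step(1)])
  have bB: "finite B \<and> d2 \<in> B \<and> E2 \<subseteq> B \<times> B \<and> sym E2 \<and> irrefl E2 \<and> (\<forall>x\<in>B. (d2, x) \<in> E2\<^sup>*)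
    \<and> finite E2 \<and> card E2 = 2 * (card B - 1) \<and> sum u B = Wf \<delta> k \<and> card B = 2 ^ (k + 1) - 1
    \<and> (\<forall>x\<in>B. u x = 1 \<or> u x = \<delta>)" by (rule sbt_basic[OF step(2)])
  have E1s: "E1 \<subseteq> A \<times> A" and E2s: "E2 \<subseteq> B \<times> B" and d1A: "d1 \<in> A" and d2B: "d2 \<in> B"
    and fA: "finite A" and fB: "finite B"
    using bA bB by auto
  have AB: "A \<inter> B = {}" and cA: "c \<notin> A" and cB: "c \<notin> B" and uc: "u c = \<delta>" using step by auto
  have sE: "sym E" unfolding E_def using bA bB by (auto simp: sym_def)
  obtain TA where TA: "search_tree E1 A TA" "root TA = d1" "cost_at u 1 TA = tf \<delta> k" using step.IH(1) by blast
  obtain TB where TB: "search_tree E2 B TB" "root TB = d2" "cost_at u 1 TB = tf \<delta> k" using step.IH(2) by blast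
  obtain ts1 where ts1: "TA = Node d1 ts1" using TA(2) by (cases TA) auto
  obtain ts2 where ts2: "TB = Node d2 ts2" using TB(2) by (cases TB) auto
  have RA: "E1 \<inter> A \<times> A = E \<inter> A \<times> A" unfolding E_def using E1s E2s AB cA cB by blast
  have RB: "E2 \<inter> B \<times> B = E \<inter> B \<times> B" unfolding E_def using E1s E2s AB cA cB by blast
  have stA: "search_tree E A (Node d1 ts1)" using st_transfer[OF TA(1) RA] ts1 by simp
  have stB: "search_tree E B (Node d2 ts2)" using st_transfer[OF TB(1) RB] ts2 by simp
  note cAs = st_cases[OF stA] and cBs = st_cases[OF stB]
  define TBc where "TBc = Node d2 (ts2 @ [Node c []])"
  have compBc: "components E (B \<union> {c} - {d2}) = set (map vset (ts2 @ [Node c []]))"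
  proof -
    have eq: "B \<union> {c} - {d2} = (B - {d2}) \<union> {c}" using cB d2B by blast
    have "components E ((B - {d2}) \<union> {c}) = components E (B - {d2}) \<union> components E {c}"
      apply (rule comp_union) unfolding E_def using E1s E2s AB cA cB d1A d2B by blast+
    also have "components E {c} = {{c}}" by (rule comp_of_conn[OF conn_single]) simp
    finally show ?thesis using eq cBs by simp
  qed
  have stBc: "search_tree E (B \<union> {c}) TBc"
    unfolding TBc_def
  proof (rule search_tree.intros)
    show "d2 \<in> B \<union> {c}" using d2B by simp
    have "{c} \<notin> set (map vset ts2)"
    proof
      assume "{c} \<in> set (map vset ts2)"
      then have "{c} \<in> components E (B - {d2})" using cBs by simp
      then have "{c} \<subseteq> B" using comp_sub by blast
      then show False using cB by simp
    qed
    then show "distinct (map vset (ts2 @ [Node c []]))" using cBs by simp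
    show "set (map vset (ts2 @ [Node c []])) = components E (B \<union> {c} - {d2})" using compBc by simp
    show "\<forall>t\<in>set (ts2 @ [Node c []]). search_tree E (vset t) t" using cBs st_leaf by auto
  qed
  have vTBc: "vset TBc = B \<union> {c}" by (rule st_vset[OF stBc])
  define T where "T = Node d1 (ts1 @ [TBc])"
  have connBc: "conn E (B \<union> {c})"
  proof (rule conn_from_root[OF sE, of _ d2], intro ballI)
    fix x assume x: "x \<in> B \<union> {c}"
    have mono: "E2\<^sup>* \<subseteq> (E \<inter> (B \<union> {c}) \<times> (B \<union> {c}))\<^sup>*"
      by (rule rtrancl_mono) (unfold E_def, use E2s in blast)
    show "(d2, x) \<in> (E \<inter> (B \<union> {c}) \<times> (B \<union> {c}))\<^sup>*"
    proof (cases "x = c")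
      case True
      have "(d2, c) \<in> E \<inter> (B \<union> {c}) \<times> (B \<union> {c})" unfolding E_def using d2B by blast
      then show ?thesis using True by blast
    next
      case False
      then have "x \<in> B" using x by blast
      then show ?thesis using bB mono by blast
    qed
  qed
  have compT: "components E (A \<union> B \<union> {c} - {d1}) = set (map vset (ts1 @ [TBc]))"
  proof -
    have eq: "A \<union> B \<union> {c} - {d1} = (A - {d1}) \<union> (B \<union> {c})" using AB cA d1A by blast
    have "components E ((A - {d1}) \<union> (B \<union> {c})) = components E (A - {d1}) \<union> components E (B \<union> {c})"
      apply (rule comp_union) unfolding E_def using E1s E2s AB cA cB d1A d2B by blast+
    also have "components E (B \<union> {c}) = {B \<union> {c}}" by (rule comp_of_conn[OF connBc]) simp
    finally show ?thesis using eq cAs vTBc by simp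
  qed
  have notin: "TBc \<notin> set ts1"
  proof
    assume "TBc \<in> set ts1"
    then have "vset TBc \<subseteq> A" using st_child[OF stA] by blast
    then show False using vTBc cA by blast
  qed
  have stT: "search_tree E (A \<union> B \<union> {c}) T"
    unfolding T_def
  proof (rule search_tree.intros)
    show "d1 \<in> A \<union> B \<union> {c}" using d1A by simp
    have "B \<union> {c} \<notin> set (map vset ts1)"
    proof
      assume "B \<union> {c} \<in> set (map vset ts1)"
      then have "B \<union> {c} \<in> components E (A - {d1})" using cAs by simp
      then have "B \<union> {c} \<subseteq> A" using comp_sub by blast
      then show False using cA by simp
    qed
    then show "distinct (map vset (ts1 @ [TBc]))" using cAs vTBc by simp
    show "set (map vset (ts1 @ [TBc])) = components E (A \<union> B \<union> {c} - {d1})" using compT by simp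
    show "\<forall>t\<in>set (ts1 @ [TBc]). search_tree E (vset t) t" using cAs stBc vTBc by auto
  qed
  let ?h = "\<lambda>t. cost_at u 1 t + sum u (vset t)"
  have cT: "cost_at u 1 T = u d1 + (\<Sum>t\<in>set ts1. ?h t) + ?h TBc"
  proof -
    have "cost_at u 1 T = u d1 + (\<Sum>t\<in>set (ts1 @ [TBc]). ?h t)"
      unfolding T_def by (rule cost_root[OF sE stT[unfolded T_def]])
    also have "set (ts1 @ [TBc]) = insert TBc (set ts1)" by simp
    also have "(\<Sum>t\<in>insert TBc (set ts1). ?h t) = ?h TBc + (\<Sum>t\<in>set ts1. ?h t)"
      using notin by simp
    finally show ?thesis by simp
  qed
  have cA': "cost_at u 1 (Node d1 ts1) = u d1 + (\<Sum>t\<in>set ts1. ?h t)" by (rule cost_root[OF sE stA])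
  have cB': "cost_at u 1 (Node d2 ts2) = u d2 + (\<Sum>t\<in>set ts2. ?h t)" by (rule cost_root[OF sE stB])
  have cBc: "cost_at u 1 TBc = u d2 + (\<Sum>t\<in>set ts2. ?h t) + 2 * u c"
  proof -
    have nl: "Node c [] \<notin> set ts2"
    proof
      assume "Node c [] \<in> set ts2"
      then have "vset (Node c []) \<subseteq> B" using st_child[OF stB] by blast
      then show False using cB by simp
    qed
    have "cost_at u 1 TBc = u d2 + (\<Sum>t\<in>set (ts2 @ [Node c []]). ?h t)"
      unfolding TBc_def by (rule cost_root[OF sE stBc[unfolded TBc_def]])
    also have "set (ts2 @ [Node c []]) = insert (Node c []) (set ts2)" by simp
    also have "(\<Sum>t\<in>insert (Node c []) (set ts2). ?h t) = ?h (Node c []) + (\<Sum>t\<in>set ts2. ?h t)"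
      using nl by simp
    finally show ?thesis by simp
  qed
  have sBc: "sum u (B \<union> {c}) = Wf \<delta> k + \<delta>" using bB cB uc fB by simp
  have "cost_at u 1 T = tf \<delta> (Suc k)"
    using cT cA' cB' cBc sBc vTBc uc TA(3) TB(3) ts1 ts2 by simp
  then show ?case using stT T_def E_def by auto
qed

lemma heavy_comp:
  assumes "is_centroid E S u r" "finite S" "\<forall>x\<in>S. u x \<ge> 0" "Y \<subseteq> S - {r}" "y0 \<in> Y"
    "\<forall>y\<in>Y. (y0, y) \<in> (E \<inter> (S - {r}) \<times> (S - {r}))\<^sup>*"
  shows "sum u Y \<le> sum u S / 2"
proof -
  define K where "K = {y \<in> S - {r}. (y0, y) \<in> (E \<inter> (S - {r}) \<times> (S - {r}))\<^sup>*}"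
  have Kc: "K \<in> components E (S - {r})" unfolding K_def comp_mem using assms(4,5) by blast
  have YK: "Y \<subseteq> K" unfolding K_def using assms(4,6) by blast
  have fK: "finite K" using assms(2) unfolding K_def by auto
  have "sum u Y \<le> sum u K"
    by (rule sum_mono2[OF fK YK]) (use assms(3) in \<open>auto simp: K_def\<close>)
  also have "\<dots> \<le> sum u S / 2" using assms(1) Kc unfolding is_centroid_def by blast
  finally show ?thesis .
qed

lemma card_set_two:
  assumes "distinct (map vset ts)" "set (map vset ts) = {A, B}" "A \<noteq> B"
  shows "card (set ts) = 2"
proof -
  have "distinct ts" using assms(1) by (simp add: distinct_map)
  then have "card (set ts) = length ts" by (simp add: distinct_card)
  also have "\<dots> = length (map vset ts)" by simp
  also have "\<dots> = card (set (map vset ts))" using distinct_card[OF assms(1)] by simp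
  also have "\<dots> = 2" using assms(2,3) by simp
  finally show ?thesis .
qed

lemma sbt_centroid:
  assumes "sbt u \<delta> k S E d" "\<delta> > 0"
  shows "(\<exists>C. centroid_tree S E u C) \<and> (\<forall>C. centroid_tree S E u C \<longrightarrow> cost_at u 1 C = cf \<delta> k)"
  using assms(1)
proof (induction rule: sbt.induct)
  case (base d)
  have ct: "centroid_tree {d} {} u (Node d [])"
    unfolding centroid_tree_def is_centroid_def using st_leaf by (auto simp: comp_empty)
  have "cost_at u 1 C = cf \<delta> 0" if "centroid_tree {d} {} u C" for C
  proof -
    have st: "search_tree {} {d} C" using that unfolding centroid_tree_def by blast
    obtain r ts where C: "C = Node r ts" by (cases C)
    have "r \<in> {d}" "set (map vset ts) = components {} ({d} - {r})" using st_cases[OF st[unfolded C]] by auto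
    then have "r = d" "ts = []" by (auto simp: comp_empty)
    then show ?thesis using C base by simp
  qed
  then show ?case using ct by blast
next
  case (step k A E1 d1 B E2 d2 c)
  let ?N = "{(d1, c), (c, d1), (d2, c), (c, d2)}"
  define E where "E = E1 \<union> E2 \<union> ?N"
  define S where "S = A \<union> B \<union> {c}"
  have bA: "finite A \<and> d1 \<in> A \<and> E1 \<subseteq> A \<times> A \<and> sym E1 \<and> irrefl E1 \<and> (\<forall>x\<in>A. (d1, x) \<in> E1\<^sup>*)
    \<and> finite E1 \<and> card E1 = 2 * (card A - 1) \<and> sum u A = Wf \<delta> k \<and> card A = 2 ^ (k + 1) - 1
    \<and> (\<forall>x\<in>A. u x = 1 \<or> u x = \<delta>)" by (rule sbt_basic[OF step(1)])
  have bB: "finite B \<and> d2 \<in> B \<and> E2 \<subseteq> B \<times> B \<and> sym E2 \<and> irrefl E2 \<and> (\<forall>x\<in>B. (d2, x) \<in> E2\<^sup>*)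
    \<and> finite E2 \<and> card E2 = 2 * (card B - 1) \<and> sum u B = Wf \<delta> k \<and> card B = 2 ^ (k + 1) - 1
    \<and> (\<forall>x\<in>B. u x = 1 \<or> u x = \<delta>)" by (rule sbt_basic[OF step(2)])
  have E1s: "E1 \<subseteq> A \<times> A" and E2s: "E2 \<subseteq> B \<times> B" and d1A: "d1 \<in> A" and d2B: "d2 \<in> B"
    and fA: "finite A" and fB: "finite B" and sA: "sum u A = Wf \<delta> k" and sB: "sum u B = Wf \<delta> k"
    using bA bB by auto
  have AB: "A \<inter> B = {}" and cA: "c \<notin> A" and cB: "c \<notin> B" and uc: "u c = \<delta>" using step by auto
  have sE: "sym E" unfolding E_def using bA bB by (auto simp: sym_def)
  have fS: "finite S" unfolding S_def using fA fB by simp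
  have unn: "\<forall>x\<in>S. u x \<ge> 0" unfolding S_def using bA bB uc assms(2) by fastforce
  have sS: "sum u S = 2 * Wf \<delta> k + \<delta>"
  proof -
    have "sum u S = sum u (A \<union> B) + u c" unfolding S_def using cA cB fA fB by (simp add: sum.insert_if)
    also have "sum u (A \<union> B) = sum u A + sum u B" using sum.union_disjoint[OF fA fB AB] .
    finally show ?thesis using sA sB uc by simp
  qed
  have RA: "E1 \<inter> A \<times> A = E \<inter> A \<times> A" unfolding E_def using E1s E2s AB cA cB by blast
  have RB: "E2 \<inter> B \<times> B = E \<inter> B \<times> B" unfolding E_def using E1s E2s AB cA cB by blast
  have connA: "conn E1 A"
  proof (rule conn_from_root[of E1 A d1])
    show "sym E1" using bA by blast
    have "E1 \<inter> A \<times> A = E1" using E1s by blast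
    then show "\<forall>x\<in>A. (d1, x) \<in> (E1 \<inter> A \<times> A)\<^sup>*" using bA by simp
  qed
  have connB: "conn E2 B"
  proof (rule conn_from_root[of E2 B d2])
    show "sym E2" using bB by blast
    have "E2 \<inter> B \<times> B = E2" using E2s by blast
    then show "\<forall>x\<in>B. (d2, x) \<in> (E2 \<inter> B \<times> B)\<^sup>*" using bB by simp
  qed
  have compS: "components E (S - {c}) = {A, B}"
  proof -
    have eq: "S - {c} = A \<union> B" unfolding S_def using cA cB by blast
    have "components E (A \<union> B) = components E A \<union> components E B"
      apply (rule comp_union) unfolding E_def using E1s E2s AB cA cB d1A d2B by blast+
    also have "components E A = {A}"
      using comp_restrict[OF RA] comp_of_conn[OF connA] d1A by auto
    also have "components E B = {B}"
      using comp_restrict[OF RB] comp_of_conn[OF connB] d2B by auto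
    finally show ?thesis using eq by auto
  qed
  have ABne: "A \<noteq> B" using AB d1A by blast
  obtain CA where CA: "centroid_tree A E1 u CA" using step.IH(1) by blast
  obtain CB where CB: "centroid_tree B E2 u CB" using step.IH(2) by blast
  have CA': "centroid_tree A E u CA" by (rule centroid_transfer[OF CA RA])
  have CB': "centroid_tree B E u CB" by (rule centroid_transfer[OF CB RB])
  have vCA: "vset CA = A" using CA' st_vset unfolding centroid_tree_def by blast
  have vCB: "vset CB = B" using CB' st_vset unfolding centroid_tree_def by blast
  have stC0: "search_tree E S (Node c [CA, CB])"
  proof (rule search_tree.intros)
    show "c \<in> S" unfolding S_def by simp
    show "distinct (map vset [CA, CB])" using vCA vCB ABne by simp
    show "set (map vset [CA, CB]) = components E (S - {c})" using vCA vCB compS by simp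
    show "\<forall>t\<in>set [CA, CB]. search_tree E (vset t) t"
      using CA' CB' vCA vCB unfolding centroid_tree_def by auto
  qed
  have ctr: "is_centroid E S u c"
    unfolding is_centroid_def using compS sA sB sS assms(2) by (auto simp: S_def)
  have "centroid_tree S E u (Node c [CA, CB])"
    unfolding centroid_tree_def
  proof (intro conjI ballI)
    show "search_tree E S (Node c [CA, CB])" by (rule stC0)
    fix s assume s: "s \<in> subtrees (Node c [CA, CB])"
    show "is_centroid E (vset s) u (root s)"
    proof (cases "s = Node c [CA, CB]")
      case True then show ?thesis using ctr st_vset[OF stC0] by simp
    next
      case False
      then have "s \<in> subtrees CA \<or> s \<in> subtrees CB" using s by auto
      then show ?thesis using CA' CB' unfolding centroid_tree_def by blast
    qed
  qed
  then have ex: "\<exists>C. centroid_tree S E u C" by blast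
  have allc: "cost_at u 1 C = cf \<delta> (Suc k)" if C: "centroid_tree S E u C" for C
  proof -
    have st: "search_tree E S C" and cent: "\<forall>s\<in>subtrees C. is_centroid E (vset s) u (root s)"
      using C unfolding centroid_tree_def by auto
    obtain r ts where Cr: "C = Node r ts" by (cases C)
    have st': "search_tree E S (Node r ts)" using st Cr by simp
    have rS: "r \<in> S" using st_cases[OF st'] by blast
    have cr: "is_centroid E S u r"
      using cent subtrees_self[of C] st_vset[OF st] Cr by auto
    have "r = c"
    proof (rule ccontr)
      assume rc: "r \<noteq> c"
      show False
      proof (cases "r \<in> A")
        case True
        have Y: "B \<union> {c} \<subseteq> S - {r}" unfolding S_def using True AB cA by blast
        have paths: "\<forall>y\<in>B \<union> {c}. (c, y) \<in> (E \<inter> (S - {r}) \<times> (S - {r}))\<^sup>*"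
        proof
          fix y assume y: "y \<in> B \<union> {c}"
          have m: "E2\<^sup>* \<subseteq> (E \<inter> (S - {r}) \<times> (S - {r}))\<^sup>*"
            by (rule rtrancl_mono) (use E2s Y in \<open>auto simp: E_def\<close>)
          have cd: "(c, d2) \<in> E \<inter> (S - {r}) \<times> (S - {r})" using Y d2B unfolding E_def by blast
          show "(c, y) \<in> (E \<inter> (S - {r}) \<times> (S - {r}))\<^sup>*"
          proof (cases "y = c")
            case False
            then have "y \<in> B" using y by blast
            then have "(d2, y) \<in> (E \<inter> (S - {r}) \<times> (S - {r}))\<^sup>*" using bB m by blast
            then show ?thesis using cd by (meson converse_rtrancl_into_rtrancl)
          qed simp
        qed
        have "sum u (B \<union> {c}) \<le> sum u S / 2"
          by (rule heavy_comp[OF cr fS unn Y _ paths]) simp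
        moreover have "sum u (B \<union> {c}) = Wf \<delta> k + \<delta>" using sB cB uc fB by simp
        ultimately show False using sS assms(2) by simp
      next
        case False
        then have rB: "r \<in> B" using rS rc unfolding S_def by blast
        have Y: "A \<union> {c} \<subseteq> S - {r}" unfolding S_def using rB AB cB by blast
        have paths: "\<forall>y\<in>A \<union> {c}. (c, y) \<in> (E \<inter> (S - {r}) \<times> (S - {r}))\<^sup>*"
        proof
          fix y assume y: "y \<in> A \<union> {c}"
          have m: "E1\<^sup>* \<subseteq> (E \<inter> (S - {r}) \<times> (S - {r}))\<^sup>*"
            by (rule rtrancl_mono) (use E1s Y in \<open>auto simp: E_def\<close>)
          have cd: "(c, d1) \<in> E \<inter> (S - {r}) \<times> (S - {r})" using Y d1A unfolding E_def by blast
          show "(c, y) \<in> (E \<inter> (S - {r}) \<times> (S - {r}))\<^sup>*"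
          proof (cases "y = c")
            case False
            then have "y \<in> A" using y by blast
            then have "(d1, y) \<in> (E \<inter> (S - {r}) \<times> (S - {r}))\<^sup>*" using bA m by blast
            then show ?thesis using cd by (meson converse_rtrancl_into_rtrancl)
          qed simp
        qed
        have "sum u (A \<union> {c}) \<le> sum u S / 2"
          by (rule heavy_comp[OF cr fS unn Y _ paths]) simp
        moreover have "sum u (A \<union> {c}) = Wf \<delta> k + \<delta>" using sA cA uc fA by simp
        ultimately show False using sS assms(2) by simp
      qed
    qed
    then have stc: "search_tree E S (Node c ts)" using st' by simp
    have cC: "cost_at u 1 (Node c ts) = u c + (\<Sum>t\<in>set ts. cost_at u 1 t + sum u (vset t))"
      by (rule cost_root[OF sE stc])
    have each: "cost_at u 1 t + sum u (vset t) = cf \<delta> k + Wf \<delta> k" if t: "t \<in> set ts" for t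
    proof -
      have ch: "search_tree E (vset t) t \<and> vset t \<in> components E (S - {c}) \<and> vset t \<subseteq> S - {c} \<and> c \<notin> vset t"
        by (rule st_child[OF stc t])
      have "subtrees t \<subseteq> subtrees C" using t \<open>r = c\<close> Cr by auto
      then have ctt: "centroid_tree (vset t) E u t"
        using ch cent unfolding centroid_tree_def by blast
      have "vset t = A \<or> vset t = B" using ch compS by blast
      then show ?thesis
      proof
        assume vA: "vset t = A"
        have "centroid_tree A E1 u t" using centroid_transfer[OF ctt[unfolded vA] RA[symmetric]] .
        then show ?thesis using step.IH(1) vA sA by auto
      next
        assume vB: "vset t = B"
        have "centroid_tree B E2 u t" using centroid_transfer[OF ctt[unfolded vB] RB[symmetric]] .
        then show ?thesis using step.IH(2) vB sB by auto
      qed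
    qed
    have card2: "card (set ts) = 2"
      using st_cases[OF stc] compS card_set_two ABne by metis
    have "(\<Sum>t\<in>set ts. cost_at u 1 t + sum u (vset t)) = 2 * (cf \<delta> k + Wf \<delta> k)"
      using each card2 by simp
    then show ?thesis using cC uc Cr \<open>r = c\<close> by simp
  qed
  show ?case using ex allc unfolding S_def E_def by blast
qed

lemma sbt_image:
  assumes "sbt u \<delta> k S E d" "inj f" "\<forall>x. u (f x) = u x"
  shows "sbt u \<delta> k (f ` S) ((\<lambda>p. (f (fst p), f (snd p))) ` E) (f d)"
  using assms(1)
proof (induction rule: sbt.induct)
  case (base d)
  then show ?case using assms(3) by (auto intro: sbt.base)
next
  case (step k A E1 d1 B E2 d2 c)
  have "f ` A \<inter> f ` B = {}" using step(3) assms(2) by (simp add: image_Int[symmetric])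
  moreover have "f c \<notin> f ` A" "f c \<notin> f ` B" using step(4,5) assms(2) by (auto simp: inj_image_mem_iff)
  moreover have "u (f c) = \<delta>" using step(6) assms(3) by simp
  ultimately have "sbt u \<delta> (Suc k) (f ` A \<union> f ` B \<union> {f c})
     ((\<lambda>p. (f (fst p), f (snd p))) ` E1 \<union> (\<lambda>p. (f (fst p), f (snd p))) ` E2
       \<union> {(f d1, f c), (f c, f d1), (f d2, f c), (f c, f d2)}) (f d1)"
    using step by (intro sbt.step) auto
  then show ?case by (simp add: image_Un)
qed

fun VV :: "nat \<Rightarrow> nat set" where
  "VV 0 = {0}"
| "VV (Suc k) = VV k \<union> (\<lambda>x. x + 2 ^ (k + 1)) ` VV k \<union> {2 ^ (k + 1) - 1}"

fun EE :: "nat \<Rightarrow> (nat \<times> nat) set" where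
  "EE 0 = {}"
| "EE (Suc k) = EE k \<union> (\<lambda>p. (fst p + 2 ^ (k + 1), snd p + 2 ^ (k + 1))) ` EE k
     \<union> {(0, 2 ^ (k + 1) - 1), (2 ^ (k + 1) - 1, 0), (0 + 2 ^ (k + 1), 2 ^ (k + 1) - 1), (2 ^ (k + 1) - 1, 0 + 2 ^ (k + 1))}"

lemma VV_bound: "x \<in> VV k \<Longrightarrow> x < 2 ^ (k + 1) - 1"
proof (induction k arbitrary: x)
  case 0 then show ?case by simp
next
  case (Suc k)
  have p: "(2::nat) ^ (k + 1) \<ge> 2" by (simp add: self_le_power)
  have e: "(2::nat) ^ (Suc k + 1) = 2 * 2 ^ (k + 1)" by simp
  from Suc.prems consider "x \<in> VV k" | y where "y \<in> VV k" "x = y + 2 ^ (k + 1)" | "x = 2 ^ (k + 1) - 1" by auto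
  then show ?case
  proof cases
    case 1 then show ?thesis using Suc.IH[of x] p unfolding e by linarith
  next
    case 2 then show ?thesis using Suc.IH[of y] p unfolding e by linarith
  next
    case 3 then show ?thesis using p unfolding e by linarith
  qed
qed

definition uu :: "real \<Rightarrow> nat \<Rightarrow> real" where
  "uu \<delta> x = (if odd x then \<delta> else 1)"

lemma sbt_VV: "sbt (uu \<delta>) \<delta> k (VV k) (EE k) 0"
proof (induction k)
  case 0
  have "uu \<delta> 0 = 1" by (simp add: uu_def)
  then show ?case by (simp only: VV.simps EE.simps) (rule sbt.base)
next
  case (Suc k)
  define m :: nat where "m = 2 ^ (k + 1)"
  define f where "f = (\<lambda>x::nat. x + m)"
  have ev: "even m" unfolding m_def by simp
  have m2: "m \<ge> 2" unfolding m_def by (simp add: self_le_power)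
  have inj: "inj f" unfolding f_def by (simp add: inj_on_def)
  have uf: "\<forall>x. uu \<delta> (f x) = uu \<delta> x" unfolding f_def uu_def using ev by simp
  have IHB: "sbt (uu \<delta>) \<delta> k (f ` VV k) ((\<lambda>p. (f (fst p), f (snd p))) ` EE k) (f 0)"
    by (rule sbt_image[OF Suc.IH inj uf])
  have bnd: "\<And>x. x \<in> VV k \<Longrightarrow> x < m - 1" using VV_bound unfolding m_def by blast
  have dis: "VV k \<inter> f ` VV k = {}" using bnd unfolding f_def by fastforce
  have c1: "m - 1 \<notin> VV k" using bnd by blast
  have c2: "m - 1 \<notin> f ` VV k" unfolding f_def using m2 by auto
  have uc: "uu \<delta> (m - 1) = \<delta>" unfolding uu_def using ev m2 by simp
  have "sbt (uu \<delta>) \<delta> (Suc k) (VV k \<union> f ` VV k \<union> {m - 1})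
     (EE k \<union> (\<lambda>p. (f (fst p), f (snd p))) ` EE k \<union> {(0, m - 1), (m - 1, 0), (f 0, m - 1), (m - 1, f 0)}) 0"
    by (rule sbt.step[OF Suc.IH IHB dis c1 c2 uc])
  then show ?case unfolding f_def m_def by simp
qed

lemma cost_at_scale: "cost_at (\<lambda>x. a * u x) d t = a * cost_at u d t"
proof (induction t arbitrary: d rule: vset.induct)
  case (1 r ts)
  have eqmap: "map (cost_at (\<lambda>x. a * u x) (Suc d)) ts = map (\<lambda>t. a * cost_at u (Suc d) t) ts"
    using 1 by simp
  have "cost_at (\<lambda>x. a * u x) d (Node r ts) = real d * (a * u r) + sum_list (map (\<lambda>t. a * cost_at u (Suc d) t) ts)"
    by (simp only: cost_at.simps eqmap)
  also have "\<dots> = a * cost_at u d (Node r ts)" by (simp add: sum_list_const_mult algebra_simps)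
  finally show ?case .
qed

lemma centroid_scale:
  assumes "a > 0"
  shows "centroid_tree S E (\<lambda>x. a * u x) C \<longleftrightarrow> centroid_tree S E u C"
proof -
  have "is_centroid E H (\<lambda>x. a * u x) v \<longleftrightarrow> is_centroid E H u v" for H v
    unfolding is_centroid_def using assms by (simp add: sum_distrib_left[symmetric])
  then show ?thesis unfolding centroid_tree_def by simp
qed

lemma OPT_bounds:
  assumes "sym E" "conn E S" "\<forall>x\<in>S. w x \<ge> 0" "search_tree E S T0" "centroid_tree S E w C"
  shows "(cost w C + sum w S) / 2 \<le> OPT S E w \<and> OPT S E w \<le> cost w T0"
proof -
  let ?X = "{cost w T | T. search_tree E S T}"
  have lb: "\<forall>x\<in>?X. (cost w C + sum w S) / 2 \<le> x"
    using two_approx[OF assms(1) _ assms(5) assms(2,3)] by fastforce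
  have ne: "?X \<noteq> {}" using assms(4) by blast
  have "(cost w C + sum w S) / 2 \<le> Inf ?X" using ne lb by (intro cInf_greatest) auto
  moreover have "Inf ?X \<le> cost w T0"
  proof (rule cInf_lower)
    show "cost w T0 \<in> ?X" using assms(4) by blast
    show "bdd_below ?X" using lb unfolding bdd_below_def by blast
  qed
  ultimately show ?thesis unfolding OPT_def by simp
qed

lemma Wf_closed: "Wf \<delta> k = 2 ^ k + \<delta> * (2 ^ k - 1)"
  by (induction k) (auto simp: algebra_simps)

lemma e_ident: "2 * tf \<delta> k - Wf \<delta> k - cf \<delta> k = 4 * \<delta> * (2 ^ k - 1)"
  by (induction k) (auto simp: algebra_simps)

lemma cf_lower: "\<delta> \<ge> 0 \<Longrightarrow> cf \<delta> k \<ge> (real k + 1) * 2 ^ k"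
proof (induction k)
  case 0 then show ?case by simp
next
  case (Suc k)
  have "Wf \<delta> (Suc k) \<ge> 2 ^ Suc k"
  proof -
    have "(1::real) \<le> 2 ^ k" by simp
    then have "(2::real) * 2 ^ k \<ge> 1" by linarith
    then have "\<delta> * (2 ^ Suc k - 1) \<ge> 0" using Suc.prems by simp
    then show ?thesis using Wf_closed[of \<delta> "Suc k"] by simp
  qed
  then show ?case using Suc by (simp add: algebra_simps)
qed

lemma inst_facts:
  fixes \<delta> :: real and k :: nat
  assumes "\<delta> > 0"
  defines "w \<equiv> (\<lambda>x. (1 / Wf \<delta> k) * uu \<delta> x)"
  shows "is_tree (VV k) (EE k) \<and> (\<forall>x\<in>VV k. w x \<ge> 0) \<and> sum w (VV k) = 1
    \<and> (\<forall>C. centroid_tree (VV k) (EE k) w C \<longrightarrow> cost w C = cf \<delta> k / Wf \<delta> k)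
    \<and> (cf \<delta> k / Wf \<delta> k + 1) / 2 \<le> OPT (VV k) (EE k) w \<and> OPT (VV k) (EE k) w \<le> tf \<delta> k / Wf \<delta> k"
proof -
  have sb: "sbt (uu \<delta>) \<delta> k (VV k) (EE k) 0" by (rule sbt_VV)
  note b = sbt_basic[OF sb]
  have Wpos: "Wf \<delta> k > 0"
  proof -
    have "(2::real) ^ k \<ge> 1" by simp
    moreover have "\<delta> * (2 ^ k - 1) \<ge> 0" using assms(1) by simp
    ultimately show ?thesis using Wf_closed[of \<delta> k] by linarith
  qed
  have sE: "sym (EE k)" and Esub: "EE k \<subseteq> VV k \<times> VV k" using b by auto
  have reach: "\<forall>x\<in>VV k. (0, x) \<in> (EE k)\<^sup>*" using b by blast
  have EEr: "EE k \<inter> VV k \<times> VV k = EE k" using Esub by blast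
  have cn: "conn (EE k) (VV k)" by (rule conn_from_root[OF sE, of _ 0]) (simp add: EEr reach)
  have tree: "is_tree (VV k) (EE k)"
    unfolding is_tree_def
  proof (intro conjI ballI)
    show "finite (VV k)" "VV k \<noteq> {}" "EE k \<subseteq> VV k \<times> VV k" "sym (EE k)" "irrefl (EE k)"
      "card (EE k) = 2 * (card (VV k) - 1)" using b by auto
    fix x y assume "x \<in> VV k" "y \<in> VV k"
    then show "(x, y) \<in> (EE k)\<^sup>*" using cn EEr unfolding conn_def by auto
  qed
  have unn: "\<forall>x. uu \<delta> x \<ge> 0" using assms(1) unfolding uu_def by simp
  have wnn: "\<forall>x\<in>VV k. w x \<ge> 0" unfolding w_def using unn Wpos by simp
  have "sum w (VV k) = (1 / Wf \<delta> k) * sum (uu \<delta>) (VV k)"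
    unfolding w_def by (rule sum_distrib_left[symmetric])
  then have sw: "sum w (VV k) = 1" using b Wpos by simp
  have ap: "1 / Wf \<delta> k > 0" using Wpos by simp
  note cen = sbt_centroid[OF sb assms(1)]
  have call: "\<forall>C. centroid_tree (VV k) (EE k) w C \<longrightarrow> cost w C = cf \<delta> k / Wf \<delta> k"
    unfolding w_def centroid_scale[OF ap] cost_def cost_at_scale using cen by simp
  obtain C0 where C0: "centroid_tree (VV k) (EE k) (uu \<delta>) C0" using cen by blast
  have C0': "centroid_tree (VV k) (EE k) w C0" unfolding w_def centroid_scale[OF ap] by (rule C0)
  obtain T0 where T0: "search_tree (EE k) (VV k) T0" "cost_at (uu \<delta>) 1 T0 = tf \<delta> k"
    using sbt_search[OF sb] by blast
  have cT0: "cost w T0 = tf \<delta> k / Wf \<delta> k" unfolding w_def cost_def cost_at_scale using T0 by simp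
  have ob: "(cost w C0 + sum w (VV k)) / 2 \<le> OPT (VV k) (EE k) w \<and> OPT (VV k) (EE k) w \<le> cost w T0"
    by (rule OPT_bounds[OF sE cn wnn T0(1) C0'])
  show ?thesis using tree wnn sw call ob cT0 C0' by auto
qed

lemma growth:
  assumes "\<delta> > 0"
  shows "cf \<delta> n / Wf \<delta> n \<ge> (real n + 1) / (1 + \<delta>)"
proof -
  have c: "cf \<delta> n \<ge> (real n + 1) * 2 ^ n" using cf_lower assms by simp
  have W: "Wf \<delta> n \<le> (1 + \<delta>) * 2 ^ n"
    using Wf_closed[of \<delta> n] assms by (simp add: algebra_simps)
  have Wp: "Wf \<delta> n > 0"
  proof -
    have "(2::real) ^ n \<ge> 1" by simp
    moreover have "\<delta> * (2 ^ n - 1) \<ge> 0" using assms by simp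
    ultimately show ?thesis using Wf_closed[of \<delta> n] by linarith
  qed
  have "(real n + 1) * 2 ^ n / ((1 + \<delta>) * 2 ^ n) \<le> cf \<delta> n / Wf \<delta> n"
  proof (rule frac_le)
    have "0 \<le> (real n + 1) * 2 ^ n" by simp
    then show "0 \<le> cf \<delta> n" using c by linarith
  qed (use c W Wp in auto)
  then show ?thesis by simp
qed

lemma Wpos: "\<delta> > 0 \<Longrightarrow> Wf \<delta> n > 0"
proof -
  assume d: "\<delta> > 0"
  have "(2::real) ^ n \<ge> 1" by simp
  moreover have "\<delta> * (2 ^ n - 1) \<ge> 0" using d by simp
  ultimately show ?thesis using Wf_closed[of \<delta> n] by linarith
qed

lemma excess:
  assumes "\<delta> > 0"
  shows "2 * (tf \<delta> n / Wf \<delta> n) - 1 - cf \<delta> n / Wf \<delta> n \<le> 4 * \<delta> * ((2 ^ n - 1) / Wf \<delta> n)"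
proof -
  have Wp: "Wf \<delta> n > 0" by (rule Wpos[OF assms])
  have "2 * (tf \<delta> n / Wf \<delta> n) - 1 - cf \<delta> n / Wf \<delta> n = (2 * tf \<delta> n - Wf \<delta> n - cf \<delta> n) / Wf \<delta> n"
    using Wp by (simp add: field_simps)
  also have "\<dots> = 4 * \<delta> * ((2 ^ n - 1) / Wf \<delta> n)" using e_ident[of \<delta> n] by simp
  finally show ?thesis by simp
qed

lemma frac_le_one: "\<delta> > 0 \<Longrightarrow> (2 ^ n - 1) / Wf \<delta> n \<le> 1"
proof -
  assume d: "\<delta> > 0"
  have Wp: "Wf \<delta> n > 0" by (rule Wpos[OF d])
  have "(2::real) ^ n - 1 \<le> Wf \<delta> n"
  proof -
    have "(2::real) ^ n \<ge> 1" by simp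
    moreover have "\<delta> * (2 ^ n - 1) \<ge> 0" using d by simp
    ultimately show ?thesis using Wf_closed[of \<delta> n] by linarith
  qed
  then show ?thesis using Wp by simp
qed

lemma frac_le_half: "(2 ^ n - 1) / Wf 1 n \<le> 1 / 2"
proof -
  have Wp: "Wf 1 n > 0" by (rule Wpos) simp
  have "2 * ((2::real) ^ n - 1) \<le> Wf 1 n" using Wf_closed[of 1 n] by simp
  then show ?thesis using Wp by (simp add: field_simps)
qed

lemma opt_growth:
  assumes "\<delta> > 0"
  shows "filterlim (\<lambda>n. OPT (VV n) (EE n) (\<lambda>x. (1 / Wf \<delta> n) * uu \<delta> x)) at_top sequentially"
proof (rule filterlim_at_top_mono)
  show "filterlim (\<lambda>n. (1 / (2 * (1 + \<delta>))) * real n) at_top sequentially"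
    by (rule filterlim_tendsto_pos_mult_at_top[OF tendsto_const _ filterlim_real_sequentially])
       (use assms in simp)
  show "\<forall>\<^sub>F n in sequentially. 1 / (2 * (1 + \<delta>)) * real n \<le> OPT (VV n) (EE n) (\<lambda>x. 1 / Wf \<delta> n * uu \<delta> x)"
  proof (rule always_eventually, rule allI)
    fix n
    have o: "(cf \<delta> n / Wf \<delta> n + 1) / 2 \<le> OPT (VV n) (EE n) (\<lambda>x. 1 / Wf \<delta> n * uu \<delta> x)"
      using inst_facts[OF assms, of n] by blast
    have g: "cf \<delta> n / Wf \<delta> n \<ge> (real n + 1) / (1 + \<delta>)" by (rule growth[OF assms])
    have "1 / (2 * (1 + \<delta>)) * real n \<le> (real n + 1) / (1 + \<delta>) / 2"
      using assms by (simp add: field_simps)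
    moreover have "(real n + 1) / (1 + \<delta>) / 2 \<le> (cf \<delta> n / Wf \<delta> n + 1) / 2"
      by (rule divide_right_mono) (use g in linarith, simp)
    ultimately show "1 / (2 * (1 + \<delta>)) * real n \<le> OPT (VV n) (EE n) (\<lambda>x. 1 / Wf \<delta> n * uu \<delta> x)"
      using o by (meson order_trans)
  qed
qed

lemma ratio_bounds:
  fixes x Q t :: real and n :: nat
  assumes "(x + 1) / 2 \<le> Q" "Q \<le> t" "2 * t \<le> x + 3" "(real n + 1) / 2 \<le> x"
  shows "2 - 12 / (real n + 1) \<le> x / Q \<and> x / Q \<le> 2"
proof -
  have xp: "x > 0" using assms(4) by (smt (verit) divide_pos_pos of_nat_0_le_iff)
  have "(x + 1) / 2 > 0" using xp by simp
  then have Opos: "Q > 0" using assms(1) by linarith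
  have up: "x / Q \<le> 2" using Opos assms(1) by (simp add: divide_le_eq)
  have t2: "t \<le> (x + 3) / 2" using assms(3) by simp
  have a1: "x / ((x + 3) / 2) \<le> x / t"
    by (rule divide_left_mono) (use t2 xp Opos assms(2) in auto)
  have a2: "x / t \<le> x / Q"
    by (rule divide_left_mono) (use xp Opos assms(2) in auto)
  have a3: "x / ((x + 3) / 2) = 2 - 6 / (x + 3)" using xp by (simp add: field_simps)
  have a4: "6 / (x + 3) \<le> 6 / ((real n + 1) / 2)"
    by (rule frac_le) (use assms(4) xp in auto)
  have a5: "6 / ((real n + 1) / 2) = 12 / (real n + 1)" by simp
  have "2 - 12 / (real n + 1) = 2 - 6 / ((real n + 1) / 2)" using a5 by simp
  also have "\<dots> \<le> 2 - 6 / (x + 3)" using a4 by simp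
  also have "\<dots> = x / ((x + 3) / 2)" using a3 by simp
  also have "\<dots> \<le> x / t" by (rule a1)
  also have "\<dots> \<le> x / Q" by (rule a2)
  finally show ?thesis using up by simp
qed

lemma wEq: "(\<lambda>x. 1 / real (card (VV n))) = (\<lambda>x. (1 / Wf 1 n) * uu 1 x)"
proof -
  have "card (VV n) = 2 ^ (n + 1) - 1" using sbt_basic[OF sbt_VV[of 1 n]] by blast
  then have "real (card (VV n)) = 2 ^ (n + 1) - 1"
    by (simp add: of_nat_diff)
  moreover have "Wf 1 n = 2 ^ (n + 1) - 1" using Wf_closed[of 1 n] by simp
  ultimately show ?thesis by (simp add: uu_def)
qed

lemma part1:
  assumes eps: "(\<epsilon>::real) > 0"
  shows "\<exists>(V :: nat \<Rightarrow> nat set) (E :: nat \<Rightarrow> (nat \<times> nat) set) (w :: nat \<Rightarrow> nat \<Rightarrow> real).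
              (\<forall>n. is_tree (V n) (E n) \<and> (\<forall>x\<in>V n. w n x \<ge> 0) \<and> sum (w n) (V n) = 1)
            \<and> filterlim (\<lambda>n. OPT (V n) (E n) (w n)) at_top sequentially
            \<and> (\<forall>n C. centroid_tree (V n) (E n) (w n) C \<longrightarrow>
                  cost (w n) C \<ge> 2 * OPT (V n) (E n) (w n) - 1 - \<epsilon>)"
proof -
  define \<delta> where "\<delta> = \<epsilon> / 4"
  have dp: "\<delta> > 0" using eps unfolding \<delta>_def by simp
  define w where "w = (\<lambda>n x. (1 / Wf \<delta> n) * uu \<delta> x)"
  have f1: "\<forall>n. is_tree (VV n) (EE n) \<and> (\<forall>x\<in>VV n. w n x \<ge> 0) \<and> sum (w n) (VV n) = 1"
    using inst_facts[OF dp] unfolding w_def by blast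
  have f2: "filterlim (\<lambda>n. OPT (VV n) (EE n) (w n)) at_top sequentially"
    unfolding w_def by (rule opt_growth[OF dp])
  have f3: "cost (w n) C \<ge> 2 * OPT (VV n) (EE n) (w n) - 1 - \<epsilon>"
    if C: "centroid_tree (VV n) (EE n) (w n) C" for n C
  proof -
    note I = inst_facts[OF dp, of n]
    define X where "X = cf \<delta> n / Wf \<delta> n"
    define Tt where "Tt = tf \<delta> n / Wf \<delta> n"
    define Fr where "Fr = (2 ^ n - 1) / Wf \<delta> n"
    define Op where "Op = OPT (VV n) (EE n) (w n)"
    have c: "cost (w n) C = X" using I C unfolding X_def w_def by blast
    have o: "Op \<le> Tt" using I unfolding Op_def Tt_def w_def by blast
    have ex: "2 * Tt - 1 - X \<le> 4 * \<delta> * Fr" using excess[OF dp, of n] unfolding Tt_def X_def Fr_def .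
    have fr: "Fr \<le> 1" using frac_le_one[OF dp, of n] unfolding Fr_def .
    have "4 * \<delta> * Fr \<le> 4 * \<delta> * 1" by (rule mult_left_mono) (use fr dp in auto)
    then have "2 * Op - 1 - \<epsilon> \<le> X" using o ex unfolding \<delta>_def by linarith
    then show ?thesis using c unfolding Op_def by simp
  qed
  show ?thesis using f1 f2 f3 by blast
qed

lemma part2:
  shows "\<exists>(V :: nat \<Rightarrow> nat set) (E :: nat \<Rightarrow> (nat \<times> nat) set).
              (\<forall>n. is_tree (V n) (E n))
            \<and> filterlim (\<lambda>n. OPT (V n) (E n) (\<lambda>x. 1 / real (card (V n)))) at_top sequentially
            \<and> (\<forall>C :: nat \<Rightarrow> nat rtree.
                 (\<forall>n. centroid_tree (V n) (E n) (\<lambda>x. 1 / real (card (V n))) (C n)) \<longrightarrow>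
                 (\<lambda>n. cost (\<lambda>x. 1 / real (card (V n))) (C n)
                        / OPT (V n) (E n) (\<lambda>x. 1 / real (card (V n)))) \<longlonglongrightarrow> 2)"
proof -
  have dp: "(1::real) > 0" by simp
  have f1: "\<forall>n. is_tree (VV n) (EE n)" using inst_facts[OF dp] by blast
  have f2: "filterlim (\<lambda>n. OPT (VV n) (EE n) (\<lambda>x. 1 / real (card (VV n)))) at_top sequentially"
    unfolding wEq by (rule opt_growth[OF dp])
  have f3: "(\<lambda>n. cost (\<lambda>x. 1 / real (card (VV n))) (C n)
                        / OPT (VV n) (EE n) (\<lambda>x. 1 / real (card (VV n)))) \<longlonglongrightarrow> 2"
    if C: "\<forall>n. centroid_tree (VV n) (EE n) (\<lambda>x. 1 / real (card (VV n))) (C n)" for C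
  proof -
    have bnd: "2 - 12 / (real n + 1) \<le> cost (\<lambda>x. 1 / real (card (VV n))) (C n)
                        / OPT (VV n) (EE n) (\<lambda>x. 1 / real (card (VV n)))
            \<and> cost (\<lambda>x. 1 / real (card (VV n))) (C n)
                        / OPT (VV n) (EE n) (\<lambda>x. 1 / real (card (VV n))) \<le> 2" for n
    proof -
      note I = inst_facts[OF dp, of n]
      define X where "X = cf 1 n / Wf 1 n"
      define Tt where "Tt = tf 1 n / Wf 1 n"
      define Fr where "Fr = (2 ^ n - 1) / Wf 1 n"
      define Op where "Op = OPT (VV n) (EE n) (\<lambda>x. (1 / Wf 1 n) * uu 1 x)"
      have Cn: "centroid_tree (VV n) (EE n) (\<lambda>x. (1 / Wf 1 n) * uu 1 x) (C n)"
        using C unfolding wEq by blast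
      have c: "cost (\<lambda>x. (1 / Wf 1 n) * uu 1 x) (C n) = X" using I Cn unfolding X_def by blast
      have o1: "(X + 1) / 2 \<le> Op" using I unfolding Op_def X_def by blast
      have o2: "Op \<le> Tt" using I unfolding Op_def Tt_def by blast
      have ex: "2 * Tt - 1 - X \<le> 4 * 1 * Fr" using excess[OF dp, of n] unfolding Tt_def X_def Fr_def .
      have fr: "Fr \<le> 1 / 2" using frac_le_half[of n] unfolding Fr_def .
      have t3: "2 * Tt \<le> X + 3" using ex fr by linarith
      have g: "(real n + 1) / (1 + 1) \<le> X" using growth[OF dp, of n] unfolding X_def .
      have g': "(real n + 1) / 2 \<le> X" using g by simp
      have "2 - 12 / (real n + 1) \<le> X / Op \<and> X / Op \<le> 2" by (rule ratio_bounds[OF o1 o2 t3 g'])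
      then show ?thesis unfolding wEq c[symmetric] Op_def .
    qed
    have lo: "(\<lambda>n. 2 - 12 / (real n + 1)) \<longlonglongrightarrow> 2 - 0"
    proof (rule tendsto_diff[OF tendsto_const])
      have "filterlim (\<lambda>n. real n + 1) at_top sequentially"
        by (rule filterlim_at_top_mono[OF filterlim_real_sequentially]) auto
      then show "(\<lambda>n. 12 / (real n + 1)) \<longlonglongrightarrow> 0"
        by (rule real_tendsto_divide_at_top[OF tendsto_const])
    qed
    show ?thesis
      by (rule real_tendsto_sandwich[of "\<lambda>n. 2 - 12 / (real n + 1)" _ _ "\<lambda>n. 2"])
         (use bnd lo in auto)
  qed
  show ?thesis using f1 f2 f3 by blast
qed

theorem theorem2:
  shows "(\<forall>\<epsilon>::real. \<epsilon> > 0 \<longrightarrow>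
           (\<exists>(V :: nat \<Rightarrow> nat set) (E :: nat \<Rightarrow> (nat \<times> nat) set) (w :: nat \<Rightarrow> nat \<Rightarrow> real).
              (\<forall>n. is_tree (V n) (E n) \<and> (\<forall>x\<in>V n. w n x \<ge> 0) \<and> sum (w n) (V n) = 1)
            \<and> filterlim (\<lambda>n. OPT (V n) (E n) (w n)) at_top sequentially
            \<and> (\<forall>n C. centroid_tree (V n) (E n) (w n) C \<longrightarrow>
                  cost (w n) C \<ge> 2 * OPT (V n) (E n) (w n) - 1 - \<epsilon>)))
       \<and> (\<exists>(V :: nat \<Rightarrow> nat set) (E :: nat \<Rightarrow> (nat \<times> nat) set).
              (\<forall>n. is_tree (V n) (E n))
            \<and> filterlim (\<lambda>n. OPT (V n) (E n) (\<lambda>x. 1 / real (card (V n)))) at_top sequentially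
            \<and> (\<forall>C :: nat \<Rightarrow> nat rtree.
                 (\<forall>n. centroid_tree (V n) (E n) (\<lambda>x. 1 / real (card (V n))) (C n)) \<longrightarrow>
                 (\<lambda>n. cost (\<lambda>x. 1 / real (card (V n))) (C n)
                        / OPT (V n) (E n) (\<lambda>x. 1 / real (card (V n)))) \<longlonglongrightarrow> 2))"
  using part1 part2 by blast

end
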